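(* If $\pi_0(\theta^* )>0$, then with $d_{k-1}:=D_{\mathrm{KL}}\big(q(\cdot;\theta^*,x_{k-1},u_{k-1})\,\|\,\hat q_k(\cdot;x_{k-1},u_{k-1})\big)$ one has $$\mathbb{E}\Big[\sum_{k=1}^{\infty}d_{k-1}\Big]=\sum_{k=1}^{\infty}\mathbb{E}[d_{k-1}]\le-\log\pi_0(\theta^* )<\infty,$$ and consequently $d_k\to0$ with probability 1.
   Context: System: $x_{k+1}=f(x_k,u_k,w_k,\theta)$, $w_k$ i.i.d. with a density; $\Theta=\{\theta_1,\theta_2,\dots\}$ countably infinite; data generated by the true parameter $\theta^*$; each $u_k$ is a measurable function of past observations $(x_0,\dots,x_k,u_0,\dots,u_{k-1})$. $q(x';\theta,x,u)$ is the (strictly positive, continuously differentiable, bounded-derivative) transition density. Posterior recursion $\pi_k(\theta)=q(x_k;\theta,x_{k-1},u_{k-1})\pi_{k-1}(\theta)/\sum_{\theta'}q(x_k;\theta',x_{k-1},u_{k-1})\pi_{k-1}(\theta')$ from prior $\pi_0$, and $\hat q_k(x';x,u):=\sum_{\theta}\pi_{k-1}(\theta)q(x';\theta,x,u)$. $D_{\mathrm{KL}}$ denotes Kullback–Leibler divergence. *)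

theory Defs
  imports "HOL-Probability.Probability"
begin

text \<open>Kullback--Leibler divergence D(P || Q) of two probability measures, in nats.
  The library's KL_divergence b M N is D(N || M), hence the argument swap.\<close>
definition DKL :: "'a measure \<Rightarrow> 'a measure \<Rightarrow> real" where
  "DKL P Q = KL_divergence (exp 1) Q P"

text \<open>Posterior recursion. Transition density convention: q th x u x' = q(x'; th, x, u).
  xs i = x_i, us i = u_i.  posterior ... k = pi_k.\<close>
fun posterior ::
  "'p set \<Rightarrow> ('p \<Rightarrow> real) \<Rightarrow> ('p \<Rightarrow> 'x \<Rightarrow> 'u \<Rightarrow> 'x \<Rightarrow> real)
   \<Rightarrow> (nat \<Rightarrow> 'x) \<Rightarrow> (nat \<Rightarrow> 'u) \<Rightarrow> nat \<Rightarrow> 'p \<Rightarrow> real" where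
  "posterior Theta pi0 q xs us 0 = pi0"
| "posterior Theta pi0 q xs us (Suc k) =
     (\<lambda>th. q th (xs k) (us k) (xs (Suc k)) * posterior Theta pi0 q xs us k th /
        (\<Sum>\<^sub>\<infinity>th'\<in>Theta. q th' (xs k) (us k) (xs (Suc k)) * posterior Theta pi0 q xs us k th'))"

definition qhat ::
  "'p set \<Rightarrow> ('p \<Rightarrow> real) \<Rightarrow> ('p \<Rightarrow> 'x \<Rightarrow> 'u \<Rightarrow> 'x \<Rightarrow> real)
   \<Rightarrow> (nat \<Rightarrow> 'x) \<Rightarrow> (nat \<Rightarrow> 'u) \<Rightarrow> nat \<Rightarrow> 'x \<Rightarrow> 'u \<Rightarrow> 'x \<Rightarrow> real" where
  "qhat Theta pi0 q xs us k x u x' =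
     (\<Sum>\<^sub>\<infinity>th\<in>Theta. posterior Theta pi0 q xs us (k - 1) th * q th x u x')"

end

theory Submission
  imports Defs
begin


lemma enn_sum_fin:
  fixes g :: "'p \<Rightarrow> real"
  assumes e: "bij_betw e UNIV T" and nn: "\<forall>th\<in>T. g th \<ge> 0"
    and fin: "(\<Sum>n. ennreal (g (e n))) \<noteq> \<top>"
  shows "(g has_sum enn2real (\<Sum>n. ennreal (g (e n)))) T"
proof -
  have nn': "\<And>n. g (e n) \<ge> 0" using nn bij_betw_apply[OF e] by blast
  have sm: "summable (\<lambda>n. g (e n))" using summable_suminf_not_top[OF nn' fin] .
  have eq: "(\<Sum>n. ennreal (g (e n))) = ennreal (\<Sum>n. g (e n))"
    using suminf_ennreal[OF nn' fin] .
  have "((\<lambda>n. g (e n)) has_sum (\<Sum>n. g (e n))) UNIV"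
    using sums_nonneg_imp_has_sum[OF summable_sums[OF sm] nn'] .
  then have "(g has_sum (\<Sum>n. g (e n))) T"
    using has_sum_reindex_bij_betw[OF e] by blast
  moreover have "enn2real (\<Sum>n. ennreal (g (e n))) = (\<Sum>n. g (e n))"
    using eq suminf_nonneg[OF sm nn'] by simp
  ultimately show ?thesis by simp
qed

lemma enn_sum_summable:
  fixes g :: "'p \<Rightarrow> real"
  assumes e: "bij_betw e UNIV T" and nn: "\<forall>th\<in>T. g th \<ge> 0"
    and sm: "g summable_on T"
  shows "(\<Sum>n. ennreal (g (e n))) \<noteq> \<top>"
proof -
  have nn': "\<And>n. g (e n) \<ge> 0" using nn bij_betw_apply[OF e] by blast
  have "(\<lambda>n. g (e n)) summable_on UNIV" using summable_on_reindex_bij_betw[OF e] sm by blast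
  then have "summable (\<lambda>n. g (e n))" by (rule summable_on_imp_summable)
  then show ?thesis using ennreal_suminf_neq_top nn' by blast
qed

lemma infsum_as_enn:
  fixes g :: "'p \<Rightarrow> real"
  assumes e: "bij_betw e UNIV T" and nn: "\<forall>th\<in>T. g th \<ge> 0"
  shows "infsum g T = enn2real (\<Sum>n. ennreal (g (e n)))"
proof (cases "(\<Sum>n. ennreal (g (e n))) = \<top>")
  case True
  then have "\<not> g summable_on T" using enn_sum_summable[OF e nn] by blast
  then show ?thesis using True by (simp add: infsum_not_exists)
next
  case False
  then show ?thesis using enn_sum_fin[OF e nn False] by (simp add: infsumI)
qed

lemma enn_of_hassum:
  fixes g :: "'p \<Rightarrow> real"
  assumes e: "bij_betw e UNIV T" and nn: "\<forall>th\<in>T. g th \<ge> 0"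
    and hs: "(g has_sum s) T"
  shows "(\<Sum>n. ennreal (g (e n))) = ennreal s"
proof -
  have fin: "(\<Sum>n. ennreal (g (e n))) \<noteq> \<top>"
    using enn_sum_summable[OF e nn] hs by (auto simp: summable_on_def)
  have "s = enn2real (\<Sum>n. ennreal (g (e n)))"
    using enn_sum_fin[OF e nn fin] hs has_sum_unique by blast
  then show ?thesis using fin by (simp add: ennreal_enn2real_if)
qed


lemma single_le_hassum:
  fixes g :: "'p \<Rightarrow> real"
  assumes "(g has_sum s) T" "\<forall>th\<in>T. g th \<ge> 0" "a \<in> T"
  shows "g a \<le> s"
proof -
  have "(g has_sum g a) {a}" using has_sum_finite[of "{a}" g] by simp
  then show ?thesis
    by (rule has_sum_mono_neutral[OF _ assms(1)]) (use assms in auto)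
qed

declare posterior.simps(2)[simp del]

locale postl =
  fixes Theta :: "'p set" and pi0 :: "'p \<Rightarrow> real" and q :: "'p \<Rightarrow> 'x \<Rightarrow> 'u \<Rightarrow> 'x \<Rightarrow> real"
    and e :: "nat \<Rightarrow> 'p" and ths :: 'p
  assumes e: "bij_betw e UNIV Theta" and pi0_nn: "\<forall>th\<in>Theta. pi0 th \<ge> 0"
    and pi0_sum: "(pi0 has_sum 1) Theta"
    and q_pos: "\<forall>th\<in>Theta. \<forall>x u x'. q th x u x' > 0" and ths: "ths \<in> Theta"
    and pi0_pos: "pi0 ths > 0"
begin

abbreviation "post xs us k \<equiv> posterior Theta pi0 q xs us k"

definition Zden :: "(nat \<Rightarrow> 'x) \<Rightarrow> (nat \<Rightarrow> 'u) \<Rightarrow> nat \<Rightarrow> real" where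
  "Zden xs us k = (\<Sum>\<^sub>\<infinity>th\<in>Theta. q th (xs k) (us k) (xs (Suc k)) * post xs us k th)"

definition Sfin :: "(nat \<Rightarrow> 'x) \<Rightarrow> (nat \<Rightarrow> 'u) \<Rightarrow> nat \<Rightarrow> bool" where
  "Sfin xs us k \<longleftrightarrow> (\<Sum>n. ennreal (q (e n) (xs k) (us k) (xs (Suc k)) * post xs us k (e n))) \<noteq> \<top>"

lemma post_Suc: "post xs us (Suc k) th = q th (xs k) (us k) (xs (Suc k)) * post xs us k th / Zden xs us k"
  by (simp add: Zden_def posterior.simps(2))

lemma qnn: "th \<in> Theta \<Longrightarrow> 0 \<le> q th x u x'"
  using q_pos less_imp_le by blast

lemma post_nn: "\<forall>th\<in>Theta. post xs us k th \<ge> 0"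
proof (induction k arbitrary: xs us)
  case 0 then show ?case using pi0_nn by simp
next
  case (Suc k)
  have g: "\<And>th. th \<in> Theta \<Longrightarrow> 0 \<le> q th (xs k) (us k) (xs (Suc k)) * post xs us k th"
    using Suc qnn by (simp add: mult_nonneg_nonneg)
  have "Zden xs us k \<ge> 0" unfolding Zden_def
    by (rule infsum_nonneg) (use g in auto)
  then show ?case using g by (auto simp: post_Suc intro!: divide_nonneg_nonneg)
qed

lemma gnn: "th \<in> Theta \<Longrightarrow> 0 \<le> q th x u x' * post xs us k th"
  using post_nn qnn by (simp add: mult_nonneg_nonneg)

lemma gnn': "th \<in> Theta \<Longrightarrow> 0 \<le> post xs us k th * q th x u x'"
  using post_nn qnn by (simp add: mult_nonneg_nonneg)

lemma Zden_pos_sum: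
  assumes "Sfin xs us k" "(post xs us k has_sum 1) Theta" "post xs us k ths > 0"
  shows "((\<lambda>th. q th (xs k) (us k) (xs (Suc k)) * post xs us k th) has_sum Zden xs us k) Theta"
    and "Zden xs us k \<ge> q ths (xs k) (us k) (xs (Suc k)) * post xs us k ths"
    and "Zden xs us k > 0"
proof -
  let ?g = "\<lambda>th. q th (xs k) (us k) (xs (Suc k)) * post xs us k th"
  have nn: "\<forall>th\<in>Theta. ?g th \<ge> 0" using gnn by blast
  have fin: "(\<Sum>n. ennreal (?g (e n))) \<noteq> \<top>" using assms(1) unfolding Sfin_def .
  have hs: "(?g has_sum enn2real (\<Sum>n. ennreal (?g (e n)))) Theta" by (rule enn_sum_fin[OF e nn fin])
  then have Z: "Zden xs us k = enn2real (\<Sum>n. ennreal (?g (e n)))"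
    unfolding Zden_def by (rule infsumI)
  show "(?g has_sum Zden xs us k) Theta" using hs unfolding Z .
  then show ge: "Zden xs us k \<ge> ?g ths" using single_le_hassum[OF _ nn ths] by blast
  have "?g ths > 0" using assms(3) q_pos ths by simp
  then show "Zden xs us k > 0" using ge by linarith
qed

lemma post_good:
  assumes "\<forall>j<k. Sfin xs us j"
  shows "(post xs us k has_sum 1) Theta \<and> post xs us k ths > 0"
  using assms
proof (induction k)
  case 0 then show ?case using pi0_sum pi0_pos by simp
next
  case (Suc k)
  then have IH: "(post xs us k has_sum 1) Theta" "post xs us k ths > 0" "Sfin xs us k" by auto
  note Z = Zden_pos_sum[OF IH(3) IH(1) IH(2)]
  have "((\<lambda>th. q th (xs k) (us k) (xs (Suc k)) * post xs us k th * inverse (Zden xs us k)) has_sum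
      (Zden xs us k * inverse (Zden xs us k))) Theta"
    by (rule has_sum_cmult_left[OF Z(1)])
  moreover have "post xs us (Suc k) = (\<lambda>th. q th (xs k) (us k) (xs (Suc k)) * post xs us k th * inverse (Zden xs us k))"
    by (rule ext) (simp add: post_Suc divide_inverse)
  ultimately have "(post xs us (Suc k) has_sum 1) Theta"
    using Z(3) by simp
  moreover have "post xs us (Suc k) ths > 0"
    using Z(3) IH(2) q_pos ths by (simp add: post_Suc)
  ultimately show ?case by blast
qed

lemma post_le1:
  assumes "\<forall>j<k. Sfin xs us j"
  shows "post xs us k ths \<le> 1"
  using single_le_hassum[OF _ post_nn ths] post_good[OF assms] by blast

lemma post_cases:
  "(post xs us k has_sum 1) Theta \<or> (\<forall>th\<in>Theta. post xs us k th = 0)"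
proof (induction k)
  case 0 then show ?case using pi0_sum by simp
next
  case (Suc k)
  let ?g = "\<lambda>th. q th (xs k) (us k) (xs (Suc k)) * post xs us k th"
  show ?case
  proof (cases "Zden xs us k = 0")
    case True then show ?thesis by (simp add: post_Suc)
  next
    case False
    then have sm: "?g summable_on Theta"
      unfolding Zden_def using infsum_not_exists by blast
    then have hs: "(?g has_sum Zden xs us k) Theta" unfolding Zden_def
      using has_sum_infsum by blast
    have "((\<lambda>th. ?g th * inverse (Zden xs us k)) has_sum
      (Zden xs us k * inverse (Zden xs us k))) Theta"
      by (rule has_sum_cmult_left[OF hs])
    moreover have "post xs us (Suc k) = (\<lambda>th. ?g th * inverse (Zden xs us k))"
      by (rule ext) (simp add: post_Suc divide_inverse)
    ultimately show ?thesis using False by simp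
  qed
qed

lemma post_enn_le1: "(\<Sum>n. ennreal (post xs us k (e n))) \<le> 1"
  using post_cases[of xs us k]
proof
  assume "(post xs us k has_sum 1) Theta"
  then show ?thesis using enn_of_hassum[OF e post_nn] by simp
next
  assume "\<forall>th\<in>Theta. post xs us k th = 0"
  then have "\<And>n. post xs us k (e n) = 0" using bij_betw_apply[OF e] by blast
  then show ?thesis by simp
qed

lemma ln_post:
  assumes "\<forall>j<n. Sfin xs us j"
  shows "ln (post xs us n ths) = ln (pi0 ths) +
     (\<Sum>k<n. ln (q ths (xs k) (us k) (xs (Suc k)) / Zden xs us k))"
  using assms
proof (induction n)
  case 0 then show ?case by simp
next
  case (Suc n)
  then have S: "\<forall>j<n. Sfin xs us j" "Sfin xs us n" by auto
  have g: "(post xs us n has_sum 1) Theta" "post xs us n ths > 0" using post_good[OF S(1)] by auto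
  note Z = Zden_pos_sum[OF S(2) g]
  have qp: "q ths (xs n) (us n) (xs (Suc n)) > 0" using q_pos ths by blast
  have "ln (post xs us (Suc n) ths) = ln (q ths (xs n) (us n) (xs (Suc n)) / Zden xs us n * post xs us n ths)"
    by (simp add: post_Suc)
  also have "\<dots> = ln (q ths (xs n) (us n) (xs (Suc n)) / Zden xs us n) + ln (post xs us n ths)"
    using qp Z(3) g(2) by (intro ln_mult_pos) auto
  finally show ?case using Suc.IH[OF S(1)] by simp
qed

lemma qhat_eq_Zden: "qhat Theta pi0 q xs us (Suc k) (xs k) (us k) (xs (Suc k)) = Zden xs us k"
  unfolding qhat_def Zden_def by (simp add: mult.commute)

end


definition hfun :: "real \<Rightarrow> real" where "hfun r = ln r + 1 / r - 1"

lemma hfun_nn: "r > 0 \<Longrightarrow> hfun r \<ge> 0"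
proof -
  assume r: "r > 0"
  have "ln (1 / r) \<le> 1 / r - 1" using r by (intro ln_le_minus_one) auto
  moreover have "ln (1 / r) = - ln r" using r by (simp add: ln_div)
  ultimately show ?thesis unfolding hfun_def by linarith
qed

lemma measurable_hfun[measurable]: "hfun \<in> borel_measurable borel"
  unfolding hfun_def by measurable

lemma KL_main:
  fixes p :: "'x::euclidean_space \<Rightarrow> real" and S :: "'x \<Rightarrow> ennreal" and c :: real
  assumes pm[measurable]: "p \<in> borel_measurable borel" and ppos: "\<forall>x. p x > 0"
    and pint: "(\<integral>\<^sup>+x. ennreal (p x) \<partial>lborel) = 1"
    and Sm[measurable]: "S \<in> borel_measurable borel" and Sint: "(\<integral>\<^sup>+x. S x \<partial>lborel) = 1"
    and c: "c > 0" and Sge: "\<forall>x. ennreal (c * p x) \<le> S x"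
  shows "ennreal (DKL (density lborel p) (density lborel (\<lambda>x. enn2real (S x))))
           = (\<integral>\<^sup>+x. ennreal (p x * hfun (p x / enn2real (S x))) \<partial>lborel)"
    and "DKL (density lborel p) (density lborel (\<lambda>x. enn2real (S x))) \<ge> 0"
proof -
  define qh where "qh = (\<lambda>x. enn2real (S x))"
  have qhm[measurable]: "qh \<in> borel_measurable borel" unfolding qh_def by measurable
  define G where "G = (\<lambda>x. p x * hfun (p x / qh x))"
  have Gm[measurable]: "G \<in> borel_measurable borel" unfolding G_def by measurable
  have fin: "AE x in lborel. S x \<noteq> \<top>"
    using nn_integral_noteq_infinite[of S lborel] Sint by auto
  have qge: "AE x in lborel. qh x \<ge> c * p x"
    using fin
  proof (rule AE_mp, intro AE_I2 impI)
    fix x assume "S x \<noteq> \<top>"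
    then have "enn2real (ennreal (c * p x)) \<le> enn2real (S x)"
      using Sge by (intro enn2real_mono) (auto simp: top.not_eq_extremum)
    then show "qh x \<ge> c * p x" unfolding qh_def using c ppos by (simp add: less_imp_le)
  qed
  have qpos: "AE x in lborel. qh x > 0"
    using qge by eventually_elim (use c ppos in \<open>auto intro: less_le_trans[OF mult_pos_pos]\<close>)
  have KL: "DKL (density lborel p) (density lborel qh) = (\<integral>x. p x * ln (p x / qh x) \<partial>lborel)"
  proof -
    have "KL_divergence (exp 1) (density lborel qh) (density lborel p) =
        (\<integral>x. p x * log (exp 1) (p x / qh x) \<partial>lborel)"
      using qpos ppos
      by (intro lborel.KL_density_density) (auto simp: qh_def less_imp_le elim!: AE_mp)
    then show ?thesis unfolding DKL_def by (simp add: log_def)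
  qed
  have Geq: "AE x in lborel. p x * ln (p x / qh x) = G x - qh x + p x"
    using qpos
  proof eventually_elim
    case (elim x)
    have px: "p x > 0" using ppos by blast
    have "p x * (1 / (p x / qh x)) = qh x" using px elim by (simp add: field_simps)
    then show ?case unfolding G_def hfun_def by (simp add: algebra_simps)
  qed
  have Gnn: "AE x in lborel. 0 \<le> G x"
    using qpos
  proof eventually_elim
    case (elim x)
    have px: "p x > 0" using ppos by blast
    have "hfun (p x / qh x) \<ge> 0" using px elim by (intro hfun_nn) simp
    then show ?case using px unfolding G_def by simp
  qed
  have Gle: "AE x in lborel. G x \<le> p x * \<bar>ln c\<bar> + qh x"
    using qpos qge
  proof eventually_elim
    case (elim x)
    have px: "p x > 0" using ppos by blast
    have "p x / qh x \<le> 1 / c" using elim px c by (simp add: field_simps)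
    then have "ln (p x / qh x) \<le> ln (1 / c)" using elim px c by (subst ln_le_cancel_iff) auto
    also have "\<dots> \<le> \<bar>ln c\<bar>" using c by (simp add: ln_div)
    finally have "p x * ln (p x / qh x) \<le> p x * \<bar>ln c\<bar>" using px by (intro mult_left_mono) auto
    moreover have "p x * (1 / (p x / qh x)) = qh x" using px elim by (simp add: field_simps)
    then have "G x = p x * ln (p x / qh x) + qh x - p x" unfolding G_def hfun_def by (simp add: algebra_simps)
    ultimately show ?case using px by linarith
  qed
  have qhS: "AE x in lborel. ennreal (qh x) = S x"
    using fin by eventually_elim (simp add: qh_def ennreal_enn2real_if)
  have pI: "integrable lborel p"
    using pint ppos by (intro integrableI_nonneg) (auto simp: less_imp_le)
  have qhint: "(\<integral>\<^sup>+x. ennreal (qh x) \<partial>lborel) = 1"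
    using Sint qhS by (simp add: nn_integral_cong_AE)
  have qI: "integrable lborel qh"
    using qhint by (intro integrableI_nonneg) (auto simp: qh_def)
  have GI: "integrable lborel G"
  proof -
    have b: "integrable lborel (\<lambda>x. p x * \<bar>ln c\<bar> + qh x)" using pI qI by auto
    have gm: "G \<in> borel_measurable lborel" by simp
    have "AE x in lborel. norm (G x) \<le> norm (p x * \<bar>ln c\<bar> + qh x)"
      using Gnn Gle by eventually_elim (use ppos in \<open>auto simp: qh_def intro!: add_nonneg_nonneg mult_nonneg_nonneg less_imp_le\<close>)
    then show ?thesis using Bochner_Integration.integrable_bound[OF b gm] by blast
  qed
  have ip: "(\<integral>x. p x \<partial>lborel) = 1"
    using pint ppos by (subst integral_eq_nn_integral) (auto simp: less_imp_le)
  have iq: "(\<integral>x. qh x \<partial>lborel) = 1"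
    using qhint by (subst integral_eq_nn_integral) (auto simp: qh_def)
  have "(\<integral>x. p x * ln (p x / qh x) \<partial>lborel) = (\<integral>x. G x - qh x + p x \<partial>lborel)"
    using Geq by (intro integral_cong_AE) auto
  also have "\<dots> = (\<integral>x. G x \<partial>lborel) - (\<integral>x. qh x \<partial>lborel) + (\<integral>x. p x \<partial>lborel)"
    using GI qI pI by simp
  finally have KLG: "DKL (density lborel p) (density lborel qh) = (\<integral>x. G x \<partial>lborel)"
    using KL ip iq by simp
  have r1: "ennreal (DKL (density lborel p) (density lborel qh)) = (\<integral>\<^sup>+x. ennreal (G x) \<partial>lborel)"
    using KLG GI Gnn by (simp add: nn_integral_eq_integral)
  then show "ennreal (DKL (density lborel p) (density lborel (\<lambda>x. enn2real (S x))))
           = (\<integral>\<^sup>+x. ennreal (p x * hfun (p x / enn2real (S x))) \<partial>lborel)"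
    unfolding qh_def G_def .
  have r2: "DKL (density lborel p) (density lborel qh) \<ge> 0"
    using KLG Gnn by (simp add: integral_nonneg_AE)
  then show "DKL (density lborel p) (density lborel (\<lambda>x. enn2real (S x))) \<ge> 0"
    unfolding qh_def .
qed


fun trajp :: "('x \<Rightarrow> 'u \<Rightarrow> 'w \<Rightarrow> 'x) \<Rightarrow> (nat \<Rightarrow> (nat \<Rightarrow> 'x) \<times> (nat \<Rightarrow> 'u) \<Rightarrow> 'u) \<Rightarrow> nat
    \<Rightarrow> 'x \<Rightarrow> (nat \<Rightarrow> 'w) \<Rightarrow> (nat \<Rightarrow> 'x) \<times> (nat \<Rightarrow> 'u)" where
  "trajp F mu 0 x0 w = ((\<lambda>_. x0), (\<lambda>_. mu 0 (restrict (\<lambda>_. x0) {..0}, restrict (\<lambda>_. undefined) {..<0})))"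
| "trajp F mu (Suc k) x0 w =
     (let xs = fst (trajp F mu k x0 w); us = snd (trajp F mu k x0 w);
          xs' = xs(Suc k := F (xs k) (us k) (w k))
      in (xs', us(Suc k := mu (Suc k) (restrict xs' {..Suc k}, restrict us {..<Suc k}))))"

lemma trajp_cong: "(\<forall>j<k. w j = w' j) \<Longrightarrow> trajp F mu k x0 w = trajp F mu k x0 w'"
  by (induction k) (auto simp: Let_def trajp.simps(2))

lemma trajp_Suc_fst_le: "i \<le> k \<Longrightarrow> fst (trajp F mu (Suc k) x0 w) i = fst (trajp F mu k x0 w) i"
  by (simp add: Let_def trajp.simps(2))

lemma trajp_Suc_snd_le: "i \<le> k \<Longrightarrow> snd (trajp F mu (Suc k) x0 w) i = snd (trajp F mu k x0 w) i"
  by (simp add: Let_def trajp.simps(2))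

lemma trajp_Suc_fst: "fst (trajp F mu (Suc k) x0 w) (Suc k) =
    F (fst (trajp F mu k x0 w) k) (snd (trajp F mu k x0 w) k) (w k)"
  by (simp add: Let_def trajp.simps(2))

lemma trajp_Suc_snd: "snd (trajp F mu (Suc k) x0 w) (Suc k) =
    mu (Suc k) (restrict (fst (trajp F mu (Suc k) x0 w)) {..Suc k}, restrict (snd (trajp F mu k x0 w)) {..<Suc k})"
  by (simp add: Let_def trajp.simps(2))

declare trajp.simps(2)[simp del]

lemma trajp_stable:
  "i \<le> k \<Longrightarrow> fst (trajp F mu k x0 w) i = fst (trajp F mu i x0 w) i \<and>
      snd (trajp F mu k x0 w) i = snd (trajp F mu i x0 w) i"
proof (induction k)
  case 0 then show ?case by simp
next
  case (Suc k)
  show ?case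
  proof (cases "i = Suc k")
    case False
    then have "i \<le> k" using Suc by simp
    then show ?thesis using Suc.IH trajp_Suc_fst_le trajp_Suc_snd_le by metis
  qed simp
qed

lemma meas_component_any:
  assumes "space Wm = UNIV"
  shows "(\<lambda>w. w k) \<in> measurable (PiM I (\<lambda>_. Wm)) Wm"
proof (cases "k \<in> I")
  case True then show ?thesis by (rule measurable_component_singleton)
next
  case False
  have "(\<lambda>w. undefined) \<in> measurable (PiM I (\<lambda>_. Wm)) Wm" using assms by simp
  then show ?thesis
    by (rule measurable_cong[THEN iffD1, rotated]) (use False in \<open>auto simp: space_PiM PiE_def extensional_def\<close>)
qed

lemma trajp_meas:
  fixes F :: "'x::euclidean_space \<Rightarrow> 'u \<Rightarrow> 'w \<Rightarrow> 'x"
  assumes F: "(\<lambda>(x, u, w). F x u w) \<in> borel \<Otimes>\<^sub>M Um \<Otimes>\<^sub>M Wm \<rightarrow>\<^sub>M borel"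
    and mu: "\<forall>k. mu k \<in> (PiM {..k} (\<lambda>_. borel)) \<Otimes>\<^sub>M (PiM {..<k} (\<lambda>_. Um)) \<rightarrow>\<^sub>M Um"
    and sp: "space Wm = UNIV"
  shows "\<forall>i\<le>k. (\<lambda>z. fst (trajp F mu k (fst z) (snd z)) i) \<in> (borel \<Otimes>\<^sub>M PiM I (\<lambda>_. Wm)) \<rightarrow>\<^sub>M borel
             \<and> (\<lambda>z. snd (trajp F mu k (fst z) (snd z)) i) \<in> (borel \<Otimes>\<^sub>M PiM I (\<lambda>_. Wm)) \<rightarrow>\<^sub>M Um"
proof (induction k)
  case 0
  have a: "(\<lambda>z. (restrict (\<lambda>_. fst z) {..0}, restrict (\<lambda>_. undefined) {..<0::nat})) \<in>
      (borel \<Otimes>\<^sub>M PiM I (\<lambda>_. Wm)) \<rightarrow>\<^sub>M (PiM {..0} (\<lambda>_. borel)) \<Otimes>\<^sub>M (PiM {..<0} (\<lambda>_. Um))"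
    by measurable
  have "(\<lambda>z. mu 0 (restrict (\<lambda>_. fst z) {..0}, restrict (\<lambda>_. undefined) {..<0::nat})) \<in>
      (borel \<Otimes>\<^sub>M PiM I (\<lambda>_. Wm)) \<rightarrow>\<^sub>M Um"
    using measurable_comp[OF a mu[rule_format, of 0]] by (simp add: comp_def)
  then show ?case by simp
next
  case (Suc k)
  let ?N = "borel \<Otimes>\<^sub>M PiM I (\<lambda>_. Wm)"
  let ?x = "\<lambda>i z. fst (trajp F mu k (fst z) (snd z)) i"
  let ?u = "\<lambda>i z. snd (trajp F mu k (fst z) (snd z)) i"
  let ?x' = "\<lambda>i z. fst (trajp F mu (Suc k) (fst z) (snd z)) i"
  let ?u' = "\<lambda>i z. snd (trajp F mu (Suc k) (fst z) (snd z)) i"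
  have wk: "(\<lambda>z. snd z k) \<in> ?N \<rightarrow>\<^sub>M Wm"
    using measurable_comp[OF measurable_snd meas_component_any[OF sp]] by (simp add: comp_def)
  have xk: "?x k \<in> ?N \<rightarrow>\<^sub>M borel" and uk: "?u k \<in> ?N \<rightarrow>\<^sub>M Um" using Suc by auto
  have trip: "(\<lambda>z. (?x k z, ?u k z, snd z k)) \<in> ?N \<rightarrow>\<^sub>M borel \<Otimes>\<^sub>M Um \<Otimes>\<^sub>M Wm"
    using xk uk wk by (intro measurable_Pair) auto
  have newx: "?x' (Suc k) \<in> ?N \<rightarrow>\<^sub>M borel"
    using measurable_comp[OF trip F] by (simp add: comp_def trajp_Suc_fst)
  have allx: "\<forall>i\<le>Suc k. ?x' i \<in> ?N \<rightarrow>\<^sub>M borel"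
  proof (intro allI impI)
    fix i assume i: "i \<le> Suc k"
    show "?x' i \<in> ?N \<rightarrow>\<^sub>M borel"
    proof (cases "i = Suc k")
      case True then show ?thesis using newx by simp
    next
      case False
      then have "i \<le> k" using i by simp
      then show ?thesis using Suc by (simp add: trajp_Suc_fst_le)
    qed
  qed
  have r1: "(\<lambda>z. restrict (\<lambda>i. ?x' i z) {..Suc k}) \<in> ?N \<rightarrow>\<^sub>M PiM {..Suc k} (\<lambda>_. borel)"
    using allx by (intro measurable_restrict) auto
  have r2: "(\<lambda>z. restrict (\<lambda>i. ?u i z) {..<Suc k}) \<in> ?N \<rightarrow>\<^sub>M PiM {..<Suc k} (\<lambda>_. Um)"
    using Suc by (intro measurable_restrict) auto
  have newu: "?u' (Suc k) \<in> ?N \<rightarrow>\<^sub>M Um"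
  proof -
    have "(\<lambda>z. (restrict (\<lambda>i. ?x' i z) {..Suc k}, restrict (\<lambda>i. ?u i z) {..<Suc k})) \<in>
        ?N \<rightarrow>\<^sub>M (PiM {..Suc k} (\<lambda>_. borel)) \<Otimes>\<^sub>M (PiM {..<Suc k} (\<lambda>_. Um))"
      using r1 r2 by (rule measurable_Pair)
    from measurable_comp[OF this mu[rule_format, of "Suc k"]]
    show ?thesis by (simp add: comp_def trajp_Suc_snd)
  qed
  show ?case
  proof (intro allI impI conjI)
    fix i assume i: "i \<le> Suc k"
    show "?x' i \<in> ?N \<rightarrow>\<^sub>M borel" using allx i by blast
    show "?u' i \<in> ?N \<rightarrow>\<^sub>M Um"
    proof (cases "i = Suc k")
      case True then show ?thesis using newu by simp
    next
      case False
      then have "i \<le> k" using i by simp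
      then show ?thesis using Suc by (simp add: trajp_Suc_snd_le)
    qed
  qed
qed


locale sys =
  fixes M :: "'o measure"
    and Um :: "'u measure" and Wm :: "'w::euclidean_space measure" and pw :: "'w \<Rightarrow> ennreal"
    and f :: "'x::euclidean_space \<Rightarrow> 'u \<Rightarrow> 'w \<Rightarrow> 'p \<Rightarrow> 'x"
    and q :: "'p \<Rightarrow> 'x \<Rightarrow> 'u \<Rightarrow> 'x \<Rightarrow> real"
    and Dq :: "'p \<Rightarrow> 'x \<Rightarrow> 'u \<Rightarrow> 'x \<Rightarrow> 'x \<Rightarrow>\<^sub>L real"
    and Theta :: "'p set" and thstar :: 'p and pi0 :: "'p \<Rightarrow> real"
    and X :: "nat \<Rightarrow> 'o \<Rightarrow> 'x" and U :: "nat \<Rightarrow> 'o \<Rightarrow> 'u" and W :: "nat \<Rightarrow> 'o \<Rightarrow> 'w"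
    and mu :: "nat \<Rightarrow> (nat \<Rightarrow> 'x) \<times> (nat \<Rightarrow> 'u) \<Rightarrow> 'u"
  assumes M: "prob_space M"
    and Theta: "countable Theta" "infinite Theta" "thstar \<in> Theta"
    and prior: "\<forall>th\<in>Theta. pi0 th \<ge> 0" "(pi0 has_sum 1) Theta"
    and prior_pos: "pi0 thstar > 0"
    and f_meas: "\<forall>th\<in>Theta. (\<lambda>(x, u, w). f x u w th) \<in> borel \<Otimes>\<^sub>M Um \<Otimes>\<^sub>M Wm \<rightarrow>\<^sub>M borel"
    and W_rv: "\<forall>k. W k \<in> M \<rightarrow>\<^sub>M Wm"
    and noise_density: "Wm = density lborel pw" "prob_space Wm"
    and X0_rv: "X 0 \<in> borel_measurable M"
    and iid_indep: "distr M (borel \<Otimes>\<^sub>M PiM UNIV (\<lambda>_. Wm)) (\<lambda>\<omega>. (X 0 \<omega>, \<lambda>k. W k \<omega>))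
                     = distr M borel (X 0) \<Otimes>\<^sub>M PiM UNIV (\<lambda>_. Wm)"
    and q_density: "\<forall>th\<in>Theta. \<forall>x u. distr Wm borel (\<lambda>w. f x u w th) = density lborel (q th x u)"
    and q_meas: "\<forall>th\<in>Theta. (\<lambda>(x, u, x'). q th x u x') \<in> borel_measurable (borel \<Otimes>\<^sub>M Um \<Otimes>\<^sub>M borel)"
    and q_pos: "\<forall>th\<in>Theta. \<forall>x u x'. q th x u x' > 0"
    and mu_meas: "\<forall>k. mu k \<in> (PiM {..k} (\<lambda>_. borel)) \<Otimes>\<^sub>M (PiM {..<k} (\<lambda>_. Um)) \<rightarrow>\<^sub>M Um"
    and U_def: "\<forall>k \<omega>. U k \<omega> = mu k (restrict (\<lambda>i. X i \<omega>) {..k}, restrict (\<lambda>i. U i \<omega>) {..<k})"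
    and X_dyn: "\<forall>k \<omega>. X (Suc k) \<omega> = f (X k \<omega>) (U k \<omega>) (W k \<omega>) thstar"
begin

abbreviation "F \<equiv> (\<lambda>x u w. f x u w thstar)"

definition xt :: "nat \<Rightarrow> 'x \<times> (nat \<Rightarrow> 'w) \<Rightarrow> 'x" where
  "xt i z = fst (trajp F mu i (fst z) (snd z)) i"
definition ut :: "nat \<Rightarrow> 'x \<times> (nat \<Rightarrow> 'w) \<Rightarrow> 'u" where
  "ut i z = snd (trajp F mu i (fst z) (snd z)) i"
definition Zk :: "nat \<Rightarrow> 'o \<Rightarrow> 'x \<times> (nat \<Rightarrow> 'w)" where
  "Zk k \<omega> = (X 0 \<omega>, restrict (\<lambda>j. W j \<omega>) {..<k})"

lemma spaceWm: "space Wm = UNIV"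
  using noise_density(1) by simp

lemma X_traj: "i \<le> k \<Longrightarrow> fst (trajp F mu k (X 0 \<omega>) (\<lambda>j. W j \<omega>)) i = X i \<omega> \<and>
    snd (trajp F mu k (X 0 \<omega>) (\<lambda>j. W j \<omega>)) i = U i \<omega>"
proof (induction k arbitrary: i)
  case 0
  have "restrict (\<lambda>_. X 0 \<omega>) {..0} = restrict (\<lambda>i. X i \<omega>) {..0::nat}" by (auto simp: restrict_def)
  moreover have "restrict (\<lambda>_. undefined) {..<0::nat} = restrict (\<lambda>i. U i \<omega>) {..<0}" by (auto simp: restrict_def)
  moreover have "U 0 \<omega> = mu 0 (restrict (\<lambda>i. X i \<omega>) {..0}, restrict (\<lambda>i. U i \<omega>) {..<0})"
    using U_def by blast
  ultimately show ?case using 0 by simp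
next
  case (Suc k)
  let ?t = "trajp F mu k (X 0 \<omega>) (\<lambda>j. W j \<omega>)"
  let ?t' = "trajp F mu (Suc k) (X 0 \<omega>) (\<lambda>j. W j \<omega>)"
  have old: "\<And>i. i \<le> k \<Longrightarrow> fst ?t' i = X i \<omega> \<and> snd ?t' i = U i \<omega>"
    using Suc.IH trajp_Suc_fst_le trajp_Suc_snd_le by metis
  have newx: "fst ?t' (Suc k) = X (Suc k) \<omega>"
    using Suc.IH[of k] X_dyn by (simp add: trajp_Suc_fst)
  have allx: "\<And>i. i \<le> Suc k \<Longrightarrow> fst ?t' i = X i \<omega>"
    using old newx le_Suc_eq by blast
  have "restrict (fst ?t') {..Suc k} = restrict (\<lambda>i. X i \<omega>) {..Suc k}"
    using allx by (auto simp: restrict_def)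
  moreover have "restrict (snd ?t) {..<Suc k} = restrict (\<lambda>i. U i \<omega>) {..<Suc k}"
    using Suc.IH by (auto simp: restrict_def)
  moreover have "U (Suc k) \<omega> = mu (Suc k) (restrict (\<lambda>i. X i \<omega>) {..Suc k}, restrict (\<lambda>i. U i \<omega>) {..<Suc k})"
    using U_def by blast
  ultimately have newu: "snd ?t' (Suc k) = U (Suc k) \<omega>"
    by (simp add: trajp_Suc_snd)
  show ?case using old allx newu Suc.prems le_Suc_eq by metis
qed

lemma X_xt: "i \<le> k \<Longrightarrow> X i \<omega> = xt i (Zk k \<omega>)"
proof -
  assume "i \<le> k"
  have "trajp F mu i (X 0 \<omega>) (restrict (\<lambda>j. W j \<omega>) {..<k}) = trajp F mu i (X 0 \<omega>) (\<lambda>j. W j \<omega>)"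
    using \<open>i \<le> k\<close> by (intro trajp_cong) auto
  then show ?thesis using X_traj[of i i \<omega>] by (simp add: xt_def Zk_def)
qed

lemma U_ut: "i \<le> k \<Longrightarrow> U i \<omega> = ut i (Zk k \<omega>)"
proof -
  assume "i \<le> k"
  have "trajp F mu i (X 0 \<omega>) (restrict (\<lambda>j. W j \<omega>) {..<k}) = trajp F mu i (X 0 \<omega>) (\<lambda>j. W j \<omega>)"
    using \<open>i \<le> k\<close> by (intro trajp_cong) auto
  then show ?thesis using X_traj[of i i \<omega>] by (simp add: ut_def Zk_def)
qed

lemma F_meas: "(\<lambda>(x, u, w). F x u w) \<in> borel \<Otimes>\<^sub>M Um \<Otimes>\<^sub>M Wm \<rightarrow>\<^sub>M borel"
  using f_meas Theta(3) by blast

lemma xt_meas[measurable]: "xt i \<in> borel_measurable (borel \<Otimes>\<^sub>M PiM I (\<lambda>_. Wm))"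
  using trajp_meas[OF F_meas mu_meas spaceWm, of i I] unfolding xt_def by blast

lemma ut_meas[measurable]: "ut i \<in> (borel \<Otimes>\<^sub>M PiM I (\<lambda>_. Wm)) \<rightarrow>\<^sub>M Um"
  using trajp_meas[OF F_meas mu_meas spaceWm, of i I] unfolding ut_def by blast

lemma W_meas[measurable]: "W k \<in> M \<rightarrow>\<^sub>M Wm"
  using W_rv by blast

lemma X0_meas[measurable]: "X 0 \<in> borel_measurable M" by (rule X0_rv)

lemma T_meas[measurable]: "(\<lambda>\<omega>. (X 0 \<omega>, \<lambda>k. W k \<omega>)) \<in> M \<rightarrow>\<^sub>M borel \<Otimes>\<^sub>M PiM UNIV (\<lambda>_. Wm)"
proof -
  have "(\<lambda>\<omega> k. W k \<omega>) \<in> M \<rightarrow>\<^sub>M PiM UNIV (\<lambda>_. Wm)"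
    by (rule measurable_PiM_single') (auto simp: spaceWm)
  then show ?thesis by (intro measurable_Pair) simp_all
qed

lemma Zk_meas[measurable]: "Zk k \<in> M \<rightarrow>\<^sub>M borel \<Otimes>\<^sub>M PiM {..<k} (\<lambda>_. Wm)"
  unfolding Zk_def by (intro measurable_Pair measurable_restrict) simp_all

lemma X_meas[measurable]: "X i \<in> borel_measurable M"
proof -
  have "(\<lambda>\<omega>. xt i (Zk i \<omega>)) \<in> borel_measurable M" by measurable
  moreover have "X i = (\<lambda>\<omega>. xt i (Zk i \<omega>))" using X_xt[of i i] by auto
  ultimately show ?thesis by simp
qed

lemma U_meas[measurable]: "U i \<in> M \<rightarrow>\<^sub>M Um"
proof -
  have "(\<lambda>\<omega>. ut i (Zk i \<omega>)) \<in> M \<rightarrow>\<^sub>M Um" by measurable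
  moreover have "U i = (\<lambda>\<omega>. ut i (Zk i \<omega>))" using U_ut[of i i] by auto
  ultimately show ?thesis by simp
qed

end


sublocale sys \<subseteq> Wp: prob_space Wm by (rule noise_density(2))

context sys begin

lemma PiW_prob: "prob_space (PiM I (\<lambda>_. Wm))"
  by (rule prob_space_PiM) (rule noise_density(2))

lemma inner_restrict:
  fixes H :: "(nat \<Rightarrow> 'w) \<Rightarrow> 'w \<Rightarrow> ennreal"
  assumes Hm[measurable]: "(\<lambda>(v, y). H v y) \<in> borel_measurable (PiM {..<k} (\<lambda>_. Wm) \<Otimes>\<^sub>M Wm)"
  shows "(\<integral>\<^sup>+w. H (restrict w {..<k}) (w k) \<partial>PiM UNIV (\<lambda>_. Wm)) =
         (\<integral>\<^sup>+v. \<integral>\<^sup>+y. H v y \<partial>Wm \<partial>PiM {..<k} (\<lambda>_. Wm))"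
proof -
  interpret PP: product_prob_space "\<lambda>_. Wm" UNIV by unfold_locales
  define H2 where "H2 = (\<lambda>v. H (restrict v {..<k}) (v k))"
  have H2m[measurable]: "H2 \<in> borel_measurable (PiM {..k} (\<lambda>_. Wm))"
  proof -
    have "(\<lambda>v. (restrict v {..<k}, v k)) \<in> PiM {..k} (\<lambda>_. Wm) \<rightarrow>\<^sub>M PiM {..<k} (\<lambda>_. Wm) \<Otimes>\<^sub>M Wm"
      by (intro measurable_Pair measurable_restrict_subset measurable_component_singleton) auto
    from measurable_comp[OF this Hm] show ?thesis by (simp add: H2_def comp_def)
  qed
  have atMost_eq: "{..k} = insert k {..<k}" by auto
  have "(\<integral>\<^sup>+w. H (restrict w {..<k}) (w k) \<partial>PiM UNIV (\<lambda>_. Wm)) =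
        (\<integral>\<^sup>+w. H2 (restrict w {..k}) \<partial>PiM UNIV (\<lambda>_. Wm))"
  proof (intro nn_integral_cong)
    fix w :: "nat \<Rightarrow> 'w"
    have "restrict (restrict w {..k}) {..<k} = restrict w {..<k}" by (rule ext) (simp add: restrict_def)
    then show "H (restrict w {..<k}) (w k) = H2 (restrict w {..k})" by (simp add: H2_def)
  qed
  also have "\<dots> = (\<integral>\<^sup>+v. H2 v \<partial>distr (PiM UNIV (\<lambda>_. Wm)) (PiM {..k} (\<lambda>_. Wm)) (\<lambda>w. restrict w {..k}))"
    by (rule nn_integral_distr[symmetric], rule measurable_restrict_subset, simp, simp)
  also have "\<dots> = (\<integral>\<^sup>+v. H2 v \<partial>PiM {..k} (\<lambda>_. Wm))"
    by (subst PP.distr_PiM_restrict_finite) auto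
  also have "\<dots> = (\<integral>\<^sup>+v. H2 v \<partial>PiM (insert k {..<k}) (\<lambda>_. Wm))"
    using atMost_eq by simp
  also have "\<dots> = (\<integral>\<^sup>+v. \<integral>\<^sup>+y. H2 (v(k := y)) \<partial>Wm \<partial>PiM {..<k} (\<lambda>_. Wm))"
    by (rule PP.product_nn_integral_insert) (use H2m atMost_eq in auto)
  also have "\<dots> = (\<integral>\<^sup>+v. \<integral>\<^sup>+y. H v y \<partial>Wm \<partial>PiM {..<k} (\<lambda>_. Wm))"
  proof (intro nn_integral_cong)
    fix v y assume v: "v \<in> space (PiM {..<k} (\<lambda>_. Wm))"
    then have "restrict (v(k := y)) {..<k} = v"
      by (auto simp: space_PiM PiE_def extensional_def restrict_def)
    then show "H2 (v(k := y)) = H v y" by (simp add: H2_def)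
  qed
  finally show ?thesis .
qed

lemma inner_restrict2:
  fixes K :: "(nat \<Rightarrow> 'w) \<Rightarrow> ennreal"
  assumes Km[measurable]: "K \<in> borel_measurable (PiM {..<k} (\<lambda>_. Wm))"
  shows "(\<integral>\<^sup>+w. K (restrict w {..<k}) \<partial>PiM UNIV (\<lambda>_. Wm)) = (\<integral>\<^sup>+v. K v \<partial>PiM {..<k} (\<lambda>_. Wm))"
proof -
  interpret PP: product_prob_space "\<lambda>_. Wm" UNIV by unfold_locales
  have "(\<integral>\<^sup>+w. K (restrict w {..<k}) \<partial>PiM UNIV (\<lambda>_. Wm)) =
      (\<integral>\<^sup>+v. K v \<partial>distr (PiM UNIV (\<lambda>_. Wm)) (PiM {..<k} (\<lambda>_. Wm)) (\<lambda>w. restrict w {..<k}))"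
    by (rule nn_integral_distr[symmetric], rule measurable_restrict_subset, simp, simp)
  also have "\<dots> = (\<integral>\<^sup>+v. K v \<partial>PiM {..<k} (\<lambda>_. Wm))"
    by (subst PP.distr_PiM_restrict_finite) auto
  finally show ?thesis .
qed

end


context sys begin

lemma sets_LP: "sets (distr M borel (X 0) \<Otimes>\<^sub>M PiM UNIV (\<lambda>_. Wm)) = sets (borel \<Otimes>\<^sub>M PiM UNIV (\<lambda>_. Wm))"
  by (intro sets_pair_measure_cong) auto

lemma chain_LP:
  fixes H :: "'x \<times> (nat \<Rightarrow> 'w) \<Rightarrow> ennreal"
  assumes Hm: "H \<in> borel_measurable (borel \<Otimes>\<^sub>M PiM UNIV (\<lambda>_. Wm))"
  shows "(\<integral>\<^sup>+\<omega>. H (X 0 \<omega>, \<lambda>j. W j \<omega>) \<partial>M) =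
     (\<integral>\<^sup>+x0. \<integral>\<^sup>+w. H (x0, w) \<partial>PiM UNIV (\<lambda>_. Wm) \<partial>distr M borel (X 0))"
proof -
  interpret Pp: prob_space "PiM UNIV (\<lambda>_. Wm)" by (rule PiW_prob)
  have "(\<integral>\<^sup>+\<omega>. H (X 0 \<omega>, \<lambda>j. W j \<omega>) \<partial>M) =
      (\<integral>\<^sup>+t. H t \<partial>distr M (borel \<Otimes>\<^sub>M PiM UNIV (\<lambda>_. Wm)) (\<lambda>\<omega>. (X 0 \<omega>, \<lambda>j. W j \<omega>)))"
    by (rule nn_integral_distr[symmetric]) (use Hm in simp_all)
  also have "\<dots> = (\<integral>\<^sup>+t. H t \<partial>(distr M borel (X 0) \<Otimes>\<^sub>M PiM UNIV (\<lambda>_. Wm)))"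
    by (simp add: iid_indep)
  also have "\<dots> = (\<integral>\<^sup>+x0. \<integral>\<^sup>+w. H (x0, w) \<partial>PiM UNIV (\<lambda>_. Wm) \<partial>distr M borel (X 0))"
    by (rule Pp.nn_integral_fst[symmetric]) (use Hm measurable_cong_sets[OF sets_LP refl] in blast)
  finally show ?thesis .
qed

lemma indep:
  fixes G :: "('x \<times> (nat \<Rightarrow> 'w)) \<times> 'w \<Rightarrow> ennreal"
  assumes Gm[measurable]: "G \<in> borel_measurable ((borel \<Otimes>\<^sub>M PiM {..<k} (\<lambda>_. Wm)) \<Otimes>\<^sub>M Wm)"
  shows "(\<integral>\<^sup>+\<omega>. G (Zk k \<omega>, W k \<omega>) \<partial>M) = (\<integral>\<^sup>+\<omega>. \<integral>\<^sup>+y. G (Zk k \<omega>, y) \<partial>Wm \<partial>M)"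
proof -
  define H1 where "H1 = (\<lambda>t::'x \<times> (nat \<Rightarrow> 'w). G ((fst t, restrict (snd t) {..<k}), snd t k))"
  have H1m: "H1 \<in> borel_measurable (borel \<Otimes>\<^sub>M PiM UNIV (\<lambda>_. Wm))"
    unfolding H1_def by measurable
  define K where "K = (\<lambda>z. \<integral>\<^sup>+y. G (z, y) \<partial>Wm)"
  have Km[measurable]: "K \<in> borel_measurable (borel \<Otimes>\<^sub>M PiM {..<k} (\<lambda>_. Wm))"
    unfolding K_def by measurable
  define H3 where "H3 = (\<lambda>t::'x \<times> (nat \<Rightarrow> 'w). K (fst t, restrict (snd t) {..<k}))"
  have H3m: "H3 \<in> borel_measurable (borel \<Otimes>\<^sub>M PiM UNIV (\<lambda>_. Wm))"
    unfolding H3_def by measurable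
  have "(\<integral>\<^sup>+\<omega>. G (Zk k \<omega>, W k \<omega>) \<partial>M) = (\<integral>\<^sup>+\<omega>. H1 (X 0 \<omega>, \<lambda>j. W j \<omega>) \<partial>M)"
    by (simp add: H1_def Zk_def)
  also have "\<dots> = (\<integral>\<^sup>+x0. \<integral>\<^sup>+w. H1 (x0, w) \<partial>PiM UNIV (\<lambda>_. Wm) \<partial>distr M borel (X 0))"
    by (rule chain_LP[OF H1m])
  also have "\<dots> = (\<integral>\<^sup>+x0. \<integral>\<^sup>+v. \<integral>\<^sup>+y. G ((x0, v), y) \<partial>Wm \<partial>PiM {..<k} (\<lambda>_. Wm) \<partial>distr M borel (X 0))"
  proof (intro nn_integral_cong)
    fix x0 :: 'x
    have m: "(\<lambda>(v, y). G ((x0, v), y)) \<in> borel_measurable (PiM {..<k} (\<lambda>_. Wm) \<Otimes>\<^sub>M Wm)"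
      by measurable
    show "(\<integral>\<^sup>+w. H1 (x0, w) \<partial>PiM UNIV (\<lambda>_. Wm)) = (\<integral>\<^sup>+v. \<integral>\<^sup>+y. G ((x0, v), y) \<partial>Wm \<partial>PiM {..<k} (\<lambda>_. Wm))"
      using inner_restrict[OF m] by (simp add: H1_def)
  qed
  also have "\<dots> = (\<integral>\<^sup>+x0. \<integral>\<^sup>+w. H3 (x0, w) \<partial>PiM UNIV (\<lambda>_. Wm) \<partial>distr M borel (X 0))"
  proof (intro nn_integral_cong)
    fix x0 :: 'x
    have m: "(\<lambda>v. K (x0, v)) \<in> borel_measurable (PiM {..<k} (\<lambda>_. Wm))"
      by measurable
    show "(\<integral>\<^sup>+v. \<integral>\<^sup>+y. G ((x0, v), y) \<partial>Wm \<partial>PiM {..<k} (\<lambda>_. Wm)) = (\<integral>\<^sup>+w. H3 (x0, w) \<partial>PiM UNIV (\<lambda>_. Wm))"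
      using inner_restrict2[OF m] by (simp add: H3_def K_def)
  qed
  also have "\<dots> = (\<integral>\<^sup>+\<omega>. H3 (X 0 \<omega>, \<lambda>j. W j \<omega>) \<partial>M)"
    by (rule chain_LP[OF H3m, symmetric])
  also have "\<dots> = (\<integral>\<^sup>+\<omega>. \<integral>\<^sup>+y. G (Zk k \<omega>, y) \<partial>Wm \<partial>M)"
    by (simp add: H3_def K_def Zk_def)
  finally show ?thesis .
qed

lemma X_Suc_xt: "X (Suc k) \<omega> = F (xt k (Zk k \<omega>)) (ut k (Zk k \<omega>)) (W k \<omega>)"
  using X_dyn X_xt[of k k \<omega>] U_ut[of k k \<omega>] by simp

lemma q_star_meas: "(\<lambda>(x, u, x'). q thstar x u x') \<in> borel_measurable (borel \<Otimes>\<^sub>M Um \<Otimes>\<^sub>M borel)"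
  using q_meas Theta(3) by blast

lemma cond:
  fixes G :: "('x \<times> (nat \<Rightarrow> 'w)) \<times> 'x \<Rightarrow> ennreal"
  assumes Gm[measurable]: "G \<in> borel_measurable ((borel \<Otimes>\<^sub>M PiM {..<k} (\<lambda>_. Wm)) \<Otimes>\<^sub>M borel)"
  shows "(\<integral>\<^sup>+\<omega>. G (Zk k \<omega>, X (Suc k) \<omega>) \<partial>M) =
    (\<integral>\<^sup>+\<omega>. \<integral>\<^sup>+x'. ennreal (q thstar (X k \<omega>) (U k \<omega>) x') * G (Zk k \<omega>, x') \<partial>lborel \<partial>M)"
proof -
  let ?N = "borel \<Otimes>\<^sub>M PiM {..<k} (\<lambda>_. Wm)"
  define G' where "G' = (\<lambda>(z, y). G (z, F (xt k z) (ut k z) y))"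
  have Fm: "(\<lambda>(z, y). F (xt k z) (ut k z) y) \<in> borel_measurable (?N \<Otimes>\<^sub>M Wm)"
  proof -
    have "(\<lambda>(z, y). (xt k z, ut k z, y)) \<in> ?N \<Otimes>\<^sub>M Wm \<rightarrow>\<^sub>M borel \<Otimes>\<^sub>M Um \<Otimes>\<^sub>M Wm"
      by measurable
    from measurable_comp[OF this F_meas] show ?thesis by (simp add: comp_def case_prod_beta)
  qed
  have G'm: "G' \<in> borel_measurable (?N \<Otimes>\<^sub>M Wm)"
  proof -
    have "(\<lambda>p. (fst p, (\<lambda>(z, y). F (xt k z) (ut k z) y) p)) \<in> ?N \<Otimes>\<^sub>M Wm \<rightarrow>\<^sub>M ?N \<Otimes>\<^sub>M borel"
      using Fm by (intro measurable_Pair) auto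
    from measurable_comp[OF this Gm] show ?thesis by (simp add: comp_def G'_def case_prod_beta)
  qed
  have "(\<integral>\<^sup>+\<omega>. G (Zk k \<omega>, X (Suc k) \<omega>) \<partial>M) = (\<integral>\<^sup>+\<omega>. G' (Zk k \<omega>, W k \<omega>) \<partial>M)"
    by (simp add: G'_def X_Suc_xt)
  also have "\<dots> = (\<integral>\<^sup>+\<omega>. \<integral>\<^sup>+y. G' (Zk k \<omega>, y) \<partial>Wm \<partial>M)"
    by (rule indep[OF G'm])
  also have "\<dots> = (\<integral>\<^sup>+\<omega>. \<integral>\<^sup>+x'. ennreal (q thstar (X k \<omega>) (U k \<omega>) x') * G (Zk k \<omega>, x') \<partial>lborel \<partial>M)"
  proof (intro nn_integral_cong)
    fix \<omega> assume \<omega>: "\<omega> \<in> space M"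
    define z where "z = Zk k \<omega>"
    define a where "a = xt k z"
    define b where "b = ut k z"
    have zsp: "z \<in> space ?N" unfolding z_def using measurable_space[OF Zk_meas \<omega>] .
    have bsp: "b \<in> space Um" unfolding b_def using measurable_space[OF ut_meas zsp] .
    have ab: "a = X k \<omega>" "b = U k \<omega>" unfolding a_def b_def z_def using X_xt[of k k \<omega>] U_ut[of k k \<omega>] by simp_all
    have Fab: "(\<lambda>y. F a b y) \<in> Wm \<rightarrow>\<^sub>M borel"
    proof -
      have "(\<lambda>y. (a, b, y)) \<in> Wm \<rightarrow>\<^sub>M borel \<Otimes>\<^sub>M Um \<Otimes>\<^sub>M Wm"
        using bsp by (intro measurable_Pair) auto
      from measurable_comp[OF this F_meas] show ?thesis by (simp add: comp_def)
    qed
    have qab: "(\<lambda>x'. ennreal (q thstar a b x')) \<in> borel_measurable lborel"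
    proof -
      have "(\<lambda>x'. (a, b, x')) \<in> lborel \<rightarrow>\<^sub>M borel \<Otimes>\<^sub>M Um \<Otimes>\<^sub>M borel"
        using bsp by (intro measurable_Pair) auto
      from measurable_comp[OF this q_star_meas] show ?thesis by (simp add: comp_def)
    qed
    have Gz: "(\<lambda>x'. G (z, x')) \<in> borel_measurable borel"
      using zsp by measurable
    have "(\<integral>\<^sup>+y. G' (z, y) \<partial>Wm) = (\<integral>\<^sup>+y. G (z, F a b y) \<partial>Wm)"
      by (simp add: G'_def a_def b_def)
    also have "\<dots> = (\<integral>\<^sup>+x'. G (z, x') \<partial>distr Wm borel (\<lambda>y. F a b y))"
      by (rule nn_integral_distr[symmetric]) (use Fab Gz in simp_all)
    also have "\<dots> = (\<integral>\<^sup>+x'. G (z, x') \<partial>density lborel (\<lambda>x'. ennreal (q thstar a b x')))"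
      using q_density Theta(3) by simp
    also have "\<dots> = (\<integral>\<^sup>+x'. ennreal (q thstar a b x') * G (z, x') \<partial>lborel)"
      by (rule nn_integral_density) (use qab Gz in simp_all)
    finally show "(\<integral>\<^sup>+y. G' (Zk k \<omega>, y) \<partial>Wm) =
        (\<integral>\<^sup>+x'. ennreal (q thstar (X k \<omega>) (U k \<omega>) x') * G (Zk k \<omega>, x') \<partial>lborel)"
      using ab by (simp add: z_def)
  qed
  finally show ?thesis .
qed

end


lemma posterior_cong:
  "(\<forall>i\<le>k. xs i = xs' i) \<Longrightarrow> (\<forall>i<k. us i = us' i) \<Longrightarrow>
    posterior T p0 q xs us k = posterior T p0 q xs' us' k"
proof (induction k)
  case 0 then show ?case by simp
next
  case (Suc k)
  then have IH: "posterior T p0 q xs us k = posterior T p0 q xs' us' k" by simp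
  have a: "xs k = xs' k" "xs (Suc k) = xs' (Suc k)" "us k = us' k" using Suc.prems by auto
  show ?case by (simp only: posterior.simps(2) IH a)
qed

sublocale sys \<subseteq> P: postl Theta pi0 q "from_nat_into Theta" thstar
  by unfold_locales (use bij_betw_from_nat_into[OF Theta(1,2)] prior prior_pos q_pos Theta(3) in auto)

context sys begin

abbreviation "en \<equiv> from_nat_into Theta"

lemma en_bij: "bij_betw en UNIV Theta" using bij_betw_from_nat_into[OF Theta(1,2)] .
lemma en_in: "en n \<in> Theta" using bij_betw_apply[OF en_bij] by blast

definition pc :: "nat \<Rightarrow> 'x \<times> (nat \<Rightarrow> 'w) \<Rightarrow> 'p \<Rightarrow> real" where
  "pc k z = posterior Theta pi0 q (\<lambda>i. xt i z) (\<lambda>i. ut i z) k"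

definition Sc :: "nat \<Rightarrow> 'x \<times> (nat \<Rightarrow> 'w) \<Rightarrow> 'x \<Rightarrow> ennreal" where
  "Sc k z x' = (\<Sum>n. ennreal (q (en n) (xt k z) (ut k z) x' * pc k z (en n)))"

definition pz :: "nat \<Rightarrow> 'x \<times> (nat \<Rightarrow> 'w) \<Rightarrow> 'x \<Rightarrow> real" where
  "pz k z x' = q thstar (xt k z) (ut k z) x'"

lemma qcomp_meas:
  assumes th: "th \<in> Theta" and a: "a \<in> borel_measurable N" and b: "b \<in> N \<rightarrow>\<^sub>M Um" and c: "c \<in> borel_measurable N"
  shows "(\<lambda>z. q th (a z) (b z) (c z)) \<in> borel_measurable N"
proof -
  have "(\<lambda>z. (a z, b z, c z)) \<in> N \<rightarrow>\<^sub>M borel \<Otimes>\<^sub>M Um \<Otimes>\<^sub>M borel"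
    using a b c by (intro measurable_Pair) auto
  from measurable_comp[OF this q_meas[rule_format, OF th]] show ?thesis by (simp add: comp_def)
qed

lemma pc_meas: "th \<in> Theta \<Longrightarrow> (\<lambda>z. pc k z th) \<in> borel_measurable (borel \<Otimes>\<^sub>M PiM I (\<lambda>_. Wm))"
proof (induction k arbitrary: th)
  case 0 then show ?case by (simp add: pc_def)
next
  case (Suc k)
  let ?N = "borel \<Otimes>\<^sub>M PiM I (\<lambda>_. Wm)"
  have qm: "\<And>th. th \<in> Theta \<Longrightarrow> (\<lambda>z. q th (xt k z) (ut k z) (xt (Suc k) z)) \<in> borel_measurable ?N"
    by (rule qcomp_meas) auto
  have Z: "\<And>z. P.Zden (\<lambda>i. xt i z) (\<lambda>i. ut i z) k =
      enn2real (\<Sum>n. ennreal (q (en n) (xt k z) (ut k z) (xt (Suc k) z) * pc k z (en n)))"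
    unfolding P.Zden_def pc_def by (rule infsum_as_enn[OF en_bij]) (use P.gnn in auto)
  have Zm: "(\<lambda>z. P.Zden (\<lambda>i. xt i z) (\<lambda>i. ut i z) k) \<in> borel_measurable ?N"
    unfolding Z using qm Suc.IH en_in by measurable
  have "(\<lambda>z. q th (xt k z) (ut k z) (xt (Suc k) z) * pc k z th / P.Zden (\<lambda>i. xt i z) (\<lambda>i. ut i z) k)
      \<in> borel_measurable ?N"
    using qm[OF Suc.prems] Suc.IH[OF Suc.prems] Zm by measurable
  then show ?case by (simp add: pc_def P.post_Suc)
qed

lemma Sc_meas: "(\<lambda>(z, x'). Sc k z x') \<in> borel_measurable ((borel \<Otimes>\<^sub>M PiM I (\<lambda>_. Wm)) \<Otimes>\<^sub>M borel)"
proof -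
  let ?N = "(borel \<Otimes>\<^sub>M PiM I (\<lambda>_. Wm)) \<Otimes>\<^sub>M borel"
  have qm: "\<And>n. (\<lambda>p. q (en n) (xt k (fst p)) (ut k (fst p)) (snd p)) \<in> borel_measurable ?N"
    by (rule qcomp_meas[OF en_in]) auto
  have pm: "\<And>n. (\<lambda>p. pc k (fst p) (en n)) \<in> borel_measurable ?N"
    using measurable_comp[OF measurable_fst pc_meas[OF en_in]] by (simp add: comp_def)
  have "(\<lambda>p. Sc k (fst p) (snd p)) \<in> borel_measurable ?N"
    unfolding Sc_def using qm pm by measurable
  then show ?thesis by (simp add: case_prod_beta)
qed

lemma pz_meas: "(\<lambda>(z, x'). pz k z x') \<in> borel_measurable ((borel \<Otimes>\<^sub>M PiM I (\<lambda>_. Wm)) \<Otimes>\<^sub>M borel)"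
proof -
  have "(\<lambda>p. pz k (fst p) (snd p)) \<in> borel_measurable ((borel \<Otimes>\<^sub>M PiM I (\<lambda>_. Wm)) \<Otimes>\<^sub>M borel)"
    unfolding pz_def by (rule qcomp_meas[OF Theta(3)]) auto
  then show ?thesis by (simp add: case_prod_beta)
qed

lemma int_q: assumes "th \<in> Theta" "b \<in> space Um"
  shows "(\<integral>\<^sup>+x'. ennreal (q th a b x') \<partial>lborel) = 1"
proof -
  have g: "(\<lambda>w. f a b w th) \<in> Wm \<rightarrow>\<^sub>M borel"
  proof -
    have "(\<lambda>w. (a, b, w)) \<in> Wm \<rightarrow>\<^sub>M borel \<Otimes>\<^sub>M Um \<Otimes>\<^sub>M Wm"
      using assms(2) by (intro measurable_Pair) auto
    from measurable_comp[OF this f_meas[rule_format, OF assms(1)]] show ?thesis by (simp add: comp_def)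
  qed
  have "prob_space (distr Wm borel (\<lambda>w. f a b w th))"
    by (rule Wp.prob_space_distr[OF g])
  then have "prob_space (density lborel (\<lambda>x'. ennreal (q th a b x')))"
    using q_density assms(1) by simp
  then have "emeasure (density lborel (\<lambda>x'. ennreal (q th a b x'))) UNIV = 1"
    using prob_space.emeasure_space_1 by force
  moreover have "(\<lambda>x'. ennreal (q th a b x')) \<in> borel_measurable lborel"
  proof -
    have "(\<lambda>x'. (a, b, x')) \<in> lborel \<rightarrow>\<^sub>M borel \<Otimes>\<^sub>M Um \<Otimes>\<^sub>M borel"
      using assms(2) by (intro measurable_Pair) auto
    from measurable_comp[OF this q_meas[rule_format, OF assms(1)]] show ?thesis by (simp add: comp_def)
  qed
  ultimately show ?thesis by (simp add: emeasure_density)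
qed

end


context sys begin

abbreviation "xsw \<omega> \<equiv> (\<lambda>i. X i \<omega>)"
abbreviation "usw \<omega> \<equiv> (\<lambda>i. U i \<omega>)"

lemma post_pc: "posterior Theta pi0 q (xsw \<omega>) (usw \<omega>) k = pc k (Zk k \<omega>)"
  unfolding pc_def by (rule posterior_cong) (auto intro: X_xt U_ut)

lemma Sfin_Sc: "P.Sfin (xsw \<omega>) (usw \<omega>) k \<longleftrightarrow> Sc k (Zk k \<omega>) (X (Suc k) \<omega>) \<noteq> \<top>"
  unfolding P.Sfin_def Sc_def post_pc using X_xt[of k k \<omega>] U_ut[of k k \<omega>] by simp

lemma Zden_Sc: "P.Zden (xsw \<omega>) (usw \<omega>) k = enn2real (Sc k (Zk k \<omega>) (X (Suc k) \<omega>))"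
proof -
  have "P.Zden (xsw \<omega>) (usw \<omega>) k =
     enn2real (\<Sum>n. ennreal (q (en n) (X k \<omega>) (U k \<omega>) (X (Suc k) \<omega>) * posterior Theta pi0 q (xsw \<omega>) (usw \<omega>) k (en n)))"
    unfolding P.Zden_def by (rule infsum_as_enn[OF en_bij]) (use P.gnn in auto)
  then show ?thesis unfolding Sc_def post_pc using X_xt[of k k \<omega>] U_ut[of k k \<omega>] by simp
qed

lemma qhat_Sc: "qhat Theta pi0 q (xsw \<omega>) (usw \<omega>) (Suc k) (X k \<omega>) (U k \<omega>) x' = enn2real (Sc k (Zk k \<omega>) x')"
proof -
  have "qhat Theta pi0 q (xsw \<omega>) (usw \<omega>) (Suc k) (X k \<omega>) (U k \<omega>) x' =
      (\<Sum>\<^sub>\<infinity>th\<in>Theta. q th (X k \<omega>) (U k \<omega>) x' * posterior Theta pi0 q (xsw \<omega>) (usw \<omega>) k th)"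
    unfolding qhat_def by (simp add: mult.commute)
  also have "\<dots> = enn2real (\<Sum>n. ennreal (q (en n) (X k \<omega>) (U k \<omega>) x' * posterior Theta pi0 q (xsw \<omega>) (usw \<omega>) k (en n)))"
    by (rule infsum_as_enn[OF en_bij]) (use P.gnn in auto)
  finally show ?thesis unfolding Sc_def post_pc using X_xt[of k k \<omega>] U_ut[of k k \<omega>] by simp
qed

lemma int_Sc:
  assumes z: "z \<in> space (borel \<Otimes>\<^sub>M PiM I (\<lambda>_. Wm))"
  shows "(\<integral>\<^sup>+x'. Sc k z x' \<partial>lborel) = (\<Sum>n. ennreal (pc k z (en n)))"
proof -
  have usp: "ut k z \<in> space Um" using measurable_space[OF ut_meas z] .
  have qm: "\<And>n. (\<lambda>x'. ennreal (q (en n) (xt k z) (ut k z) x')) \<in> borel_measurable lborel"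
  proof -
    fix n
    have "(\<lambda>x'. (xt k z, ut k z, x')) \<in> lborel \<rightarrow>\<^sub>M borel \<Otimes>\<^sub>M Um \<Otimes>\<^sub>M borel"
      using usp by (intro measurable_Pair) auto
    from measurable_comp[OF this q_meas[rule_format, OF en_in]] show "?thesis n" by (simp add: comp_def)
  qed
  have pn: "\<And>n. pc k z (en n) \<ge> 0" unfolding pc_def using P.post_nn en_in by blast
  have qn: "\<And>n x'. q (en n) (xt k z) (ut k z) x' \<ge> 0" using P.qnn en_in by blast
  have "(\<integral>\<^sup>+x'. Sc k z x' \<partial>lborel) =
      (\<integral>\<^sup>+x'. (\<Sum>n. ennreal (q (en n) (xt k z) (ut k z) x') * ennreal (pc k z (en n))) \<partial>lborel)"
    unfolding Sc_def using pn qn by (simp add: ennreal_mult)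
  also have "\<dots> = (\<Sum>n. \<integral>\<^sup>+x'. ennreal (q (en n) (xt k z) (ut k z) x') * ennreal (pc k z (en n)) \<partial>lborel)"
    by (rule nn_integral_suminf) (use qm in simp)
  also have "\<dots> = (\<Sum>n. (\<integral>\<^sup>+x'. ennreal (q (en n) (xt k z) (ut k z) x') \<partial>lborel) * ennreal (pc k z (en n)))"
    using qm by (simp add: nn_integral_multc)
  also have "\<dots> = (\<Sum>n. ennreal (pc k z (en n)))"
    using int_q[OF en_in usp] by simp
  finally show ?thesis .
qed

lemma int_Sc_le1:
  assumes z: "z \<in> space (borel \<Otimes>\<^sub>M PiM I (\<lambda>_. Wm))"
  shows "(\<integral>\<^sup>+x'. Sc k z x' \<partial>lborel) \<le> 1"
  unfolding int_Sc[OF z] pc_def by (rule P.post_enn_le1)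

lemma AE_Sc_fin:
  "AE \<omega> in M. Sc k (Zk k \<omega>) (X (Suc k) \<omega>) \<noteq> \<top>"
proof -
  let ?N = "borel \<Otimes>\<^sub>M PiM {..<k} (\<lambda>_. Wm)"
  define G where "G = (\<lambda>p. if Sc k (fst p) (snd p) = \<top> then 1 else 0 :: ennreal)"
  have Scm[measurable]: "(\<lambda>p. Sc k (fst p) (snd p)) \<in> borel_measurable (?N \<Otimes>\<^sub>M borel)"
    using Sc_meas[of k "{..<k}"] by (simp add: case_prod_beta)
  have Gm: "G \<in> borel_measurable (?N \<Otimes>\<^sub>M borel)"
    unfolding G_def by measurable
  have "(\<integral>\<^sup>+\<omega>. G (Zk k \<omega>, X (Suc k) \<omega>) \<partial>M) =
      (\<integral>\<^sup>+\<omega>. \<integral>\<^sup>+x'. ennreal (q thstar (X k \<omega>) (U k \<omega>) x') * G (Zk k \<omega>, x') \<partial>lborel \<partial>M)"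
    by (rule cond[OF Gm])
  also have "\<dots> = (\<integral>\<^sup>+\<omega>. 0 \<partial>M)"
  proof (intro nn_integral_cong)
    fix \<omega> assume \<omega>: "\<omega> \<in> space M"
    have z: "Zk k \<omega> \<in> space ?N" using measurable_space[OF Zk_meas \<omega>] .
    have Szm: "(\<lambda>x'. Sc k (Zk k \<omega>) x') \<in> borel_measurable lborel"
      using measurable_Pair2[OF Scm z] by simp
    have "(\<integral>\<^sup>+x'. Sc k (Zk k \<omega>) x' \<partial>lborel) \<noteq> \<infinity>"
    proof
      assume "(\<integral>\<^sup>+x'. Sc k (Zk k \<omega>) x' \<partial>lborel) = \<infinity>"
      then show False using int_Sc_le1[OF z, of k] ennreal_one_neq_top top.extremum_unique infinity_ennreal_def by metis
    qed
    then have ae: "AE x' in lborel. Sc k (Zk k \<omega>) x' \<noteq> \<infinity>"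
      using nn_integral_noteq_infinite[OF Szm] by blast
    have "AE x' in lborel. ennreal (q thstar (X k \<omega>) (U k \<omega>) x') * G (Zk k \<omega>, x') = 0"
      using ae by eventually_elim (simp add: G_def infinity_ennreal_def)
    from nn_integral_cong_AE[OF this] show "(\<integral>\<^sup>+x'. ennreal (q thstar (X k \<omega>) (U k \<omega>) x') * G (Zk k \<omega>, x') \<partial>lborel) = 0"
      by simp
  qed
  finally have int0: "(\<integral>\<^sup>+\<omega>. G (Zk k \<omega>, X (Suc k) \<omega>) \<partial>M) = 0" by simp
  have "(\<lambda>\<omega>. G (Zk k \<omega>, X (Suc k) \<omega>)) \<in> borel_measurable M"
    using measurable_comp[OF measurable_Pair[OF Zk_meas X_meas] Gm] by (simp add: comp_def)
  then have "AE \<omega> in M. G (Zk k \<omega>, X (Suc k) \<omega>) = 0"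
    using int0 by (simp add: nn_integral_0_iff_AE)
  then show ?thesis by eventually_elim (auto simp: G_def)
qed

definition Good :: "'o \<Rightarrow> bool" where
  "Good \<omega> \<longleftrightarrow> (\<forall>k. Sc k (Zk k \<omega>) (X (Suc k) \<omega>) \<noteq> \<top>)"

lemma AE_Good: "AE \<omega> in M. Good \<omega>"
  unfolding Good_def using AE_Sc_fin by (simp add: AE_all_countable)

lemma Good_post:
  assumes "Good \<omega>"
  shows "(pc k (Zk k \<omega>) has_sum 1) Theta \<and> pc k (Zk k \<omega>) thstar > 0"
proof -
  have "\<forall>j<k. P.Sfin (xsw \<omega>) (usw \<omega>) j" using assms unfolding Good_def Sfin_Sc by blast
  from P.post_good[OF this] show ?thesis unfolding post_pc .
qed

end


context sys begin

definition Dc :: "nat \<Rightarrow> 'x \<times> (nat \<Rightarrow> 'w) \<Rightarrow> ennreal" where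
  "Dc k z = (\<integral>\<^sup>+x'. ennreal (pz k z x' * hfun (pz k z x' / enn2real (Sc k z x'))) \<partial>lborel)"

definition hG :: "nat \<Rightarrow> ('x \<times> (nat \<Rightarrow> 'w)) \<times> 'x \<Rightarrow> ennreal" where
  "hG k p = ennreal (hfun (pz k (fst p) (snd p) / enn2real (Sc k (fst p) (snd p))))"

definition rG :: "nat \<Rightarrow> ('x \<times> (nat \<Rightarrow> 'w)) \<times> 'x \<Rightarrow> ennreal" where
  "rG k p = ennreal (enn2real (Sc k (fst p) (snd p)) / pz k (fst p) (snd p))"

lemma Sc_meas': "(\<lambda>p. Sc k (fst p) (snd p)) \<in> borel_measurable ((borel \<Otimes>\<^sub>M PiM I (\<lambda>_. Wm)) \<Otimes>\<^sub>M borel)"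
  using Sc_meas[of k I] by (simp add: case_prod_beta)
lemma pz_meas': "(\<lambda>p. pz k (fst p) (snd p)) \<in> borel_measurable ((borel \<Otimes>\<^sub>M PiM I (\<lambda>_. Wm)) \<Otimes>\<^sub>M borel)"
  using pz_meas[of k I] by (simp add: case_prod_beta)

lemma hG_meas: "hG k \<in> borel_measurable ((borel \<Otimes>\<^sub>M PiM I (\<lambda>_. Wm)) \<Otimes>\<^sub>M borel)"
  unfolding hG_def using Sc_meas'[of k I] pz_meas'[of k I] by measurable
lemma rG_meas: "rG k \<in> borel_measurable ((borel \<Otimes>\<^sub>M PiM I (\<lambda>_. Wm)) \<Otimes>\<^sub>M borel)"
  unfolding rG_def using Sc_meas'[of k I] pz_meas'[of k I] by measurable

lemma Dc_meas: "Dc k \<in> borel_measurable (borel \<Otimes>\<^sub>M PiM I (\<lambda>_. Wm))"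
proof -
  have "(\<lambda>(z, x'). ennreal (pz k z x' * hfun (pz k z x' / enn2real (Sc k z x'))))
     \<in> borel_measurable ((borel \<Otimes>\<^sub>M PiM I (\<lambda>_. Wm)) \<Otimes>\<^sub>M lborel)"
  proof -
    have "(\<lambda>p. ennreal (pz k (fst p) (snd p) * hfun (pz k (fst p) (snd p) / enn2real (Sc k (fst p) (snd p)))))
     \<in> borel_measurable ((borel \<Otimes>\<^sub>M PiM I (\<lambda>_. Wm)) \<Otimes>\<^sub>M borel)"
      using Sc_meas'[of k I] pz_meas'[of k I] by measurable
    then show ?thesis by (simp add: case_prod_beta)
  qed
  then show ?thesis unfolding Dc_def by measurable
qed

lemma pz_X: "pz k (Zk k \<omega>) x' = q thstar (X k \<omega>) (U k \<omega>) x'"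
  unfolding pz_def using X_xt[of k k \<omega>] U_ut[of k k \<omega>] by simp

lemma d_eq:
  assumes G: "Good \<omega>" and \<omega>: "\<omega> \<in> space M"
  shows "ennreal (DKL (density lborel (q thstar (X k \<omega>) (U k \<omega>)))
       (density lborel (qhat Theta pi0 q (xsw \<omega>) (usw \<omega>) (Suc k) (X k \<omega>) (U k \<omega>)))) = Dc k (Zk k \<omega>)
   \<and> DKL (density lborel (q thstar (X k \<omega>) (U k \<omega>)))
       (density lborel (qhat Theta pi0 q (xsw \<omega>) (usw \<omega>) (Suc k) (X k \<omega>) (U k \<omega>))) \<ge> 0"
proof -
  let ?N = "borel \<Otimes>\<^sub>M PiM {..<k} (\<lambda>_. Wm)"
  define z where "z = Zk k \<omega>"
  have zsp: "z \<in> space ?N" unfolding z_def using measurable_space[OF Zk_meas \<omega>] .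
  have usp: "U k \<omega> \<in> space Um" using measurable_space[OF U_meas \<omega>] .
  have gp: "(pc k z has_sum 1) Theta" "pc k z thstar > 0" using Good_post[OF G] unfolding z_def by auto
  define p where "p = (\<lambda>x'. q thstar (X k \<omega>) (U k \<omega>) x')"
  define S where "S = (\<lambda>x'. Sc k z x')"
  have pe: "p = pz k z" unfolding p_def z_def by (rule ext) (simp add: pz_X)
  have pm: "p \<in> borel_measurable borel"
    using measurable_Pair2[OF pz_meas zsp] unfolding pe by simp
  have ppos: "\<forall>x. p x > 0" unfolding p_def using q_pos Theta(3) by blast
  have pint: "(\<integral>\<^sup>+x. ennreal (p x) \<partial>lborel) = 1" unfolding p_def by (rule int_q[OF Theta(3) usp])
  have Sm: "S \<in> borel_measurable borel"
    using measurable_Pair2[OF Sc_meas zsp] unfolding S_def by simp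
  have Sint: "(\<integral>\<^sup>+x. S x \<partial>lborel) = 1"
    unfolding S_def int_Sc[OF zsp]
    using enn_of_hassum[OF en_bij _ gp(1)] P.post_nn unfolding pc_def by simp
  obtain n0 where n0: "en n0 = thstar" using bij_betw_imp_surj_on[OF en_bij] Theta(3) by (metis imageE)
  have Sge: "\<forall>x. ennreal (pc k z thstar * p x) \<le> S x"
  proof
    fix x
    have "ennreal (pc k z thstar * p x) = (\<Sum>n\<in>{n0}. ennreal (q (en n) (xt k z) (ut k z) x * pc k z (en n)))"
      using n0 X_xt[of k k \<omega>] U_ut[of k k \<omega>] unfolding p_def z_def by (simp add: mult.commute)
    also have "\<dots> \<le> S x" unfolding S_def Sc_def by (rule sum_le_suminf) auto
    finally show "ennreal (pc k z thstar * p x) \<le> S x" .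
  qed
  note KL = KL_main[OF pm ppos pint Sm Sint gp(2) Sge]
  have dens: "(\<lambda>x'. ennreal (qhat Theta pi0 q (xsw \<omega>) (usw \<omega>) (Suc k) (X k \<omega>) (U k \<omega>) x')) =
      (\<lambda>x'. ennreal (enn2real (S x')))"
    unfolding S_def z_def qhat_Sc ..
  have Dc: "Dc k (Zk k \<omega>) = (\<integral>\<^sup>+x. ennreal (p x * hfun (p x / enn2real (S x))) \<partial>lborel)"
    unfolding Dc_def p_def S_def z_def pz_X ..
  show ?thesis using KL unfolding dens Dc p_def by simp
qed

lemma E_h: "(\<integral>\<^sup>+\<omega>. hG k (Zk k \<omega>, X (Suc k) \<omega>) \<partial>M) = (\<integral>\<^sup>+\<omega>. Dc k (Zk k \<omega>) \<partial>M)"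
proof -
  have "(\<integral>\<^sup>+\<omega>. hG k (Zk k \<omega>, X (Suc k) \<omega>) \<partial>M) =
      (\<integral>\<^sup>+\<omega>. \<integral>\<^sup>+x'. ennreal (q thstar (X k \<omega>) (U k \<omega>) x') * hG k (Zk k \<omega>, x') \<partial>lborel \<partial>M)"
    by (rule cond[OF hG_meas])
  also have "\<dots> = (\<integral>\<^sup>+\<omega>. Dc k (Zk k \<omega>) \<partial>M)"
  proof (intro nn_integral_cong)
    fix \<omega>
    have "\<And>x'. ennreal (q thstar (X k \<omega>) (U k \<omega>) x') * hG k (Zk k \<omega>, x') =
        ennreal (pz k (Zk k \<omega>) x' * hfun (pz k (Zk k \<omega>) x' / enn2real (Sc k (Zk k \<omega>) x')))"
    proof -
      fix x'
      have qp: "q thstar (X k \<omega>) (U k \<omega>) x' \<ge> 0" using q_pos Theta(3) less_imp_le by blast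
      show "?thesis x'" using qp by (simp add: hG_def pz_X ennreal_mult')
    qed
    then show "(\<integral>\<^sup>+x'. ennreal (q thstar (X k \<omega>) (U k \<omega>) x') * hG k (Zk k \<omega>, x') \<partial>lborel) = Dc k (Zk k \<omega>)"
      unfolding Dc_def by simp
  qed
  finally show ?thesis .
qed

lemma enn2real_le_self: "ennreal (enn2real x) \<le> x"
  by (cases x) auto

lemma E_r: "(\<integral>\<^sup>+\<omega>. rG k (Zk k \<omega>, X (Suc k) \<omega>) \<partial>M) \<le> 1"
proof -
  interpret Mp: prob_space M by (rule M)
  have "(\<integral>\<^sup>+\<omega>. rG k (Zk k \<omega>, X (Suc k) \<omega>) \<partial>M) =
      (\<integral>\<^sup>+\<omega>. \<integral>\<^sup>+x'. ennreal (q thstar (X k \<omega>) (U k \<omega>) x') * rG k (Zk k \<omega>, x') \<partial>lborel \<partial>M)"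
    by (rule cond[OF rG_meas])
  also have "\<dots> \<le> (\<integral>\<^sup>+\<omega>. 1 \<partial>M)"
  proof (intro nn_integral_mono)
    fix \<omega> assume \<omega>: "\<omega> \<in> space M"
    have zsp: "Zk k \<omega> \<in> space (borel \<Otimes>\<^sub>M PiM {..<k} (\<lambda>_. Wm))" using measurable_space[OF Zk_meas \<omega>] .
    have "\<And>x'. ennreal (q thstar (X k \<omega>) (U k \<omega>) x') * rG k (Zk k \<omega>, x') =
        ennreal (enn2real (Sc k (Zk k \<omega>) x'))"
    proof -
      fix x'
      have qp: "q thstar (X k \<omega>) (U k \<omega>) x' > 0" using q_pos Theta(3) by blast
      have "ennreal (q thstar (X k \<omega>) (U k \<omega>) x') * ennreal (enn2real (Sc k (Zk k \<omega>) x') / q thstar (X k \<omega>) (U k \<omega>) x')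
          = ennreal (q thstar (X k \<omega>) (U k \<omega>) x' * (enn2real (Sc k (Zk k \<omega>) x') / q thstar (X k \<omega>) (U k \<omega>) x'))"
        by (rule ennreal_mult'[symmetric]) (use qp in simp)
      also have "\<dots> = ennreal (enn2real (Sc k (Zk k \<omega>) x'))" using qp by simp
      finally have eq: "ennreal (q thstar (X k \<omega>) (U k \<omega>) x') * ennreal (enn2real (Sc k (Zk k \<omega>) x') / q thstar (X k \<omega>) (U k \<omega>) x')
          = ennreal (enn2real (Sc k (Zk k \<omega>) x'))" .
      have r: "rG k (Zk k \<omega>, x') = ennreal (enn2real (Sc k (Zk k \<omega>) x') / q thstar (X k \<omega>) (U k \<omega>) x')"
        by (simp add: rG_def pz_X)
      show "ennreal (q thstar (X k \<omega>) (U k \<omega>) x') * rG k (Zk k \<omega>, x') = ennreal (enn2real (Sc k (Zk k \<omega>) x'))"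
        unfolding r by (rule eq)
    qed
    then have "(\<integral>\<^sup>+x'. ennreal (q thstar (X k \<omega>) (U k \<omega>) x') * rG k (Zk k \<omega>, x') \<partial>lborel)
        = (\<integral>\<^sup>+x'. ennreal (enn2real (Sc k (Zk k \<omega>) x')) \<partial>lborel)" by simp
    also have "\<dots> \<le> (\<integral>\<^sup>+x'. Sc k (Zk k \<omega>) x' \<partial>lborel)"
      by (intro nn_integral_mono enn2real_le_self)
    also have "\<dots> \<le> 1" by (rule int_Sc_le1[OF zsp])
    finally show "(\<integral>\<^sup>+x'. ennreal (q thstar (X k \<omega>) (U k \<omega>) x') * rG k (Zk k \<omega>, x') \<partial>lborel) \<le> 1" .
  qed
  also have "\<dots> = 1" using Mp.emeasure_space_1 by simp
  finally show ?thesis .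
qed

end


context sys begin

lemma pi0_le1: "pi0 thstar \<le> 1"
  using single_le_hassum[OF prior(2) prior(1) Theta(3)] .

lemma pointwise:
  assumes G: "Good \<omega>"
  shows "(\<Sum>k<n. hG k (Zk k \<omega>, X (Suc k) \<omega>)) + of_nat n
     \<le> ennreal (- ln (pi0 thstar)) + (\<Sum>k<n. rG k (Zk k \<omega>, X (Suc k) \<omega>))"
proof -
  define Zd where "Zd = (\<lambda>k. enn2real (Sc k (Zk k \<omega>) (X (Suc k) \<omega>)))"
  define qs where "qs = (\<lambda>k. q thstar (X k \<omega>) (U k \<omega>) (X (Suc k) \<omega>))"
  have Sf: "\<And>k. P.Sfin (xsw \<omega>) (usw \<omega>) k" using G unfolding Good_def Sfin_Sc by blast
  have Zd_eq: "\<And>k. P.Zden (xsw \<omega>) (usw \<omega>) k = Zd k" unfolding Zd_def by (rule Zden_Sc)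
  have Zpos: "\<And>k. Zd k > 0"
  proof -
    fix k
    have "\<forall>j<k. P.Sfin (xsw \<omega>) (usw \<omega>) j" using Sf by blast
    from P.post_good[OF this] have "(P.post (xsw \<omega>) (usw \<omega>) k has_sum 1) Theta" "P.post (xsw \<omega>) (usw \<omega>) k thstar > 0"
      by auto
    from P.Zden_pos_sum(3)[OF Sf this] show "Zd k > 0" unfolding Zd_eq .
  qed
  have qpos: "\<And>k. qs k > 0" unfolding qs_def using q_pos Theta(3) by blast
  have hG_eq: "\<And>k. hG k (Zk k \<omega>, X (Suc k) \<omega>) = ennreal (hfun (qs k / Zd k))"
    by (simp add: hG_def pz_X qs_def Zd_def)
  have rG_eq: "\<And>k. rG k (Zk k \<omega>, X (Suc k) \<omega>) = ennreal (Zd k / qs k)"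
    by (simp add: rG_def pz_X qs_def Zd_def)
  have hnn: "\<And>k. hfun (qs k / Zd k) \<ge> 0" using qpos Zpos by (intro hfun_nn) simp
  have rnn: "\<And>k. Zd k / qs k \<ge> 0" using qpos Zpos by (simp add: less_imp_le)
  have hexp: "\<And>k. hfun (qs k / Zd k) = ln (qs k / Zd k) + Zd k / qs k - 1"
    unfolding hfun_def by simp
  have lnp: "ln (P.post (xsw \<omega>) (usw \<omega>) n thstar) = ln (pi0 thstar) + (\<Sum>k<n. ln (qs k / Zd k))"
    using P.ln_post[of n "xsw \<omega>" "usw \<omega>"] Sf unfolding Zd_eq qs_def by simp
  have pg: "P.post (xsw \<omega>) (usw \<omega>) n thstar > 0" "P.post (xsw \<omega>) (usw \<omega>) n thstar \<le> 1"
    using P.post_good[of n "xsw \<omega>" "usw \<omega>"] P.post_le1[of n "xsw \<omega>" "usw \<omega>"] Sf by auto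
  have "ln (P.post (xsw \<omega>) (usw \<omega>) n thstar) \<le> 0" using pg by simp
  then have sumln: "(\<Sum>k<n. ln (qs k / Zd k)) \<le> - ln (pi0 thstar)" using lnp by linarith
  have real_ineq: "(\<Sum>k<n. hfun (qs k / Zd k)) + real n \<le> - ln (pi0 thstar) + (\<Sum>k<n. Zd k / qs k)"
  proof -
    have "(\<Sum>k<n. hfun (qs k / Zd k)) = (\<Sum>k<n. ln (qs k / Zd k)) + (\<Sum>k<n. Zd k / qs k) - real n"
      unfolding hexp by (simp add: sum.distrib sum_subtractf)
    then show ?thesis using sumln by linarith
  qed
  have lnnn: "- ln (pi0 thstar) \<ge> 0" using pi0_le1 prior_pos by simp
  have "(\<Sum>k<n. hG k (Zk k \<omega>, X (Suc k) \<omega>)) + of_nat n = ennreal ((\<Sum>k<n. hfun (qs k / Zd k)) + real n)"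
    unfolding hG_eq using hnn by (simp add: sum_ennreal ennreal_plus sum_nonneg ennreal_of_nat_eq_real_of_nat)
  also have "\<dots> \<le> ennreal (- ln (pi0 thstar) + (\<Sum>k<n. Zd k / qs k))"
    by (rule ennreal_leI[OF real_ineq])
  also have "\<dots> = ennreal (- ln (pi0 thstar)) + (\<Sum>k<n. rG k (Zk k \<omega>, X (Suc k) \<omega>))"
  proof -
    have s: "(\<Sum>k<n. rG k (Zk k \<omega>, X (Suc k) \<omega>)) = ennreal (\<Sum>k<n. Zd k / qs k)"
      unfolding rG_eq using rnn by (simp add: sum_ennreal)
    have "ennreal (- ln (pi0 thstar) + (\<Sum>k<n. Zd k / qs k)) = ennreal (- ln (pi0 thstar)) + ennreal (\<Sum>k<n. Zd k / qs k)"
      by (rule ennreal_plus) (use lnnn rnn in \<open>auto intro: sum_nonneg\<close>)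
    then show ?thesis unfolding s .
  qed
  finally show ?thesis .
qed

lemma hG_comp_meas: "(\<lambda>\<omega>. hG k (Zk k \<omega>, X (Suc k) \<omega>)) \<in> borel_measurable M"
  using measurable_comp[OF measurable_Pair[OF Zk_meas X_meas] hG_meas] by (simp add: comp_def)
lemma rG_comp_meas: "(\<lambda>\<omega>. rG k (Zk k \<omega>, X (Suc k) \<omega>)) \<in> borel_measurable M"
  using measurable_comp[OF measurable_Pair[OF Zk_meas X_meas] rG_meas] by (simp add: comp_def)
lemma Dc_comp_meas: "(\<lambda>\<omega>. Dc k (Zk k \<omega>)) \<in> borel_measurable M"
  using measurable_comp[OF Zk_meas Dc_meas] by (simp add: comp_def)

lemma partial: "(\<Sum>k<n. \<integral>\<^sup>+\<omega>. Dc k (Zk k \<omega>) \<partial>M) \<le> ennreal (- ln (pi0 thstar))"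
proof -
  interpret Mp: prob_space M by (rule M)
  have "(\<Sum>k<n. \<integral>\<^sup>+\<omega>. Dc k (Zk k \<omega>) \<partial>M) + of_nat n =
      (\<Sum>k<n. \<integral>\<^sup>+\<omega>. hG k (Zk k \<omega>, X (Suc k) \<omega>) \<partial>M) + (\<integral>\<^sup>+\<omega>. of_nat n \<partial>M)"
    using Mp.emeasure_space_1 by (simp add: E_h)
  also have "\<dots> = (\<integral>\<^sup>+\<omega>. (\<Sum>k<n. hG k (Zk k \<omega>, X (Suc k) \<omega>)) + of_nat n \<partial>M)"
    using hG_comp_meas by (simp add: nn_integral_add nn_integral_sum)
  also have "\<dots> \<le> (\<integral>\<^sup>+\<omega>. ennreal (- ln (pi0 thstar)) + (\<Sum>k<n. rG k (Zk k \<omega>, X (Suc k) \<omega>)) \<partial>M)"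
    by (rule nn_integral_mono_AE) (use AE_Good pointwise in \<open>auto elim!: AE_mp\<close>)
  also have "\<dots> = ennreal (- ln (pi0 thstar)) + (\<Sum>k<n. \<integral>\<^sup>+\<omega>. rG k (Zk k \<omega>, X (Suc k) \<omega>) \<partial>M)"
    using rG_comp_meas Mp.emeasure_space_1 by (simp add: nn_integral_add nn_integral_sum)
  also have "\<dots> \<le> ennreal (- ln (pi0 thstar)) + (\<Sum>k<n. 1)"
    by (intro add_left_mono sum_mono E_r)
  also have "\<dots> = ennreal (- ln (pi0 thstar)) + of_nat n" by simp
  finally have "of_nat n + (\<Sum>k<n. \<integral>\<^sup>+\<omega>. Dc k (Zk k \<omega>) \<partial>M) \<le> of_nat n + ennreal (- ln (pi0 thstar))"
    by (simp add: add.commute)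
  then show ?thesis by (simp add: ennreal_add_left_cancel_le)
qed

lemma total: "(\<Sum>k. \<integral>\<^sup>+\<omega>. Dc k (Zk k \<omega>) \<partial>M) \<le> ennreal (- ln (pi0 thstar))"
  unfolding suminf_eq_SUP by (intro SUP_least partial)

lemma main_sys:
  fixes d
  defines "d \<equiv> (\<lambda>j \<omega>. DKL (density lborel (q thstar (X j \<omega>) (U j \<omega>)))
       (density lborel (qhat Theta pi0 q (\<lambda>i. X i \<omega>) (\<lambda>i. U i \<omega>) (Suc j) (X j \<omega>) (U j \<omega>))))"
  shows "(\<integral>\<^sup>+\<omega>. (\<Sum>j. ennreal (d j \<omega>)) \<partial>M) = (\<Sum>j. \<integral>\<^sup>+\<omega>. ennreal (d j \<omega>) \<partial>M)
       \<and> (\<Sum>j. \<integral>\<^sup>+\<omega>. ennreal (d j \<omega>) \<partial>M) \<le> ennreal (- ln (pi0 thstar))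
       \<and> ennreal (- ln (pi0 thstar)) < \<infinity>
       \<and> (AE \<omega> in M. (\<lambda>j. d j \<omega>) \<longlonglongrightarrow> 0)"
proof -
  have AEd: "AE \<omega> in M. \<forall>j. ennreal (d j \<omega>) = Dc j (Zk j \<omega>) \<and> d j \<omega> \<ge> 0"
    using AE_Good
  proof (rule AE_mp, intro AE_I2 impI allI)
    fix \<omega> j assume "\<omega> \<in> space M" "Good \<omega>"
    then show "ennreal (d j \<omega>) = Dc j (Zk j \<omega>) \<and> d j \<omega> \<ge> 0"
      unfolding d_def using d_eq by blast
  qed
  have Ej: "\<And>j. (\<integral>\<^sup>+\<omega>. ennreal (d j \<omega>) \<partial>M) = (\<integral>\<^sup>+\<omega>. Dc j (Zk j \<omega>) \<partial>M)"
    by (rule nn_integral_cong_AE) (use AEd in \<open>auto elim!: AE_mp\<close>)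
  have sumeq: "(\<integral>\<^sup>+\<omega>. (\<Sum>j. ennreal (d j \<omega>)) \<partial>M) = (\<integral>\<^sup>+\<omega>. (\<Sum>j. Dc j (Zk j \<omega>)) \<partial>M)"
    by (rule nn_integral_cong_AE) (use AEd in \<open>auto elim!: AE_mp\<close>)
  have swap: "(\<integral>\<^sup>+\<omega>. (\<Sum>j. Dc j (Zk j \<omega>)) \<partial>M) = (\<Sum>j. \<integral>\<^sup>+\<omega>. Dc j (Zk j \<omega>) \<partial>M)"
    by (rule nn_integral_suminf) (rule Dc_comp_meas)
  have c1: "(\<integral>\<^sup>+\<omega>. (\<Sum>j. ennreal (d j \<omega>)) \<partial>M) = (\<Sum>j. \<integral>\<^sup>+\<omega>. ennreal (d j \<omega>) \<partial>M)"
    unfolding sumeq swap Ej ..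
  have c2: "(\<Sum>j. \<integral>\<^sup>+\<omega>. ennreal (d j \<omega>) \<partial>M) \<le> ennreal (- ln (pi0 thstar))"
    unfolding Ej by (rule total)
  have c3: "ennreal (- ln (pi0 thstar)) < \<infinity>" by simp
  have summ: "(\<lambda>\<omega>. \<Sum>j. Dc j (Zk j \<omega>)) \<in> borel_measurable M"
    using Dc_comp_meas by measurable
  have "(\<integral>\<^sup>+\<omega>. (\<Sum>j. Dc j (Zk j \<omega>)) \<partial>M) \<noteq> \<infinity>"
    using c2 c3 unfolding swap Ej[symmetric] by (auto simp: top_unique)
  then have AEfin: "AE \<omega> in M. (\<Sum>j. Dc j (Zk j \<omega>)) \<noteq> \<infinity>"
    using nn_integral_noteq_infinite[OF summ] by blast
  have c4: "AE \<omega> in M. (\<lambda>j. d j \<omega>) \<longlonglongrightarrow> 0"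
    using AEd AEfin
  proof eventually_elim
    case (elim \<omega>)
    then have "(\<Sum>j. ennreal (d j \<omega>)) \<noteq> \<top>" by simp
    then have "summable (\<lambda>j. d j \<omega>)" using elim by (intro summable_suminf_not_top) auto
    then show ?case by (rule summable_LIMSEQ_zero)
  qed
  show ?thesis using c1 c2 c3 c4 by blast
qed

end

theorem mainTheorem6:
  fixes M :: "'o measure"
    and Um :: "'u measure" and Wm :: "'w::euclidean_space measure" and pw :: "'w \<Rightarrow> ennreal"
    and f :: "'x::euclidean_space \<Rightarrow> 'u \<Rightarrow> 'w \<Rightarrow> 'p \<Rightarrow> 'x"
    and q :: "'p \<Rightarrow> 'x \<Rightarrow> 'u \<Rightarrow> 'x \<Rightarrow> real"
    and Dq :: "'p \<Rightarrow> 'x \<Rightarrow> 'u \<Rightarrow> 'x \<Rightarrow> 'x \<Rightarrow>\<^sub>L real"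
    and Theta :: "'p set" and thstar :: 'p and pi0 :: "'p \<Rightarrow> real"
    and X :: "nat \<Rightarrow> 'o \<Rightarrow> 'x" and U :: "nat \<Rightarrow> 'o \<Rightarrow> 'u" and W :: "nat \<Rightarrow> 'o \<Rightarrow> 'w"
    and mu :: "nat \<Rightarrow> (nat \<Rightarrow> 'x) \<times> (nat \<Rightarrow> 'u) \<Rightarrow> 'u"
  assumes M: "prob_space M"
    \<comment> \<open>countably infinite parameter set, true parameter, prior\<close>
    and Theta: "countable Theta" "infinite Theta" "thstar \<in> Theta"
    and prior: "\<forall>th\<in>Theta. pi0 th \<ge> 0" "(pi0 has_sum 1) Theta"
    and prior_pos: "pi0 thstar > 0"
    \<comment> \<open>system map and noise\<close>
    and f_meas: "\<forall>th\<in>Theta. (\<lambda>(x, u, w). f x u w th) \<in> borel \<Otimes>\<^sub>M Um \<Otimes>\<^sub>M Wm \<rightarrow>\<^sub>M borel"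
    and W_rv: "\<forall>k. W k \<in> M \<rightarrow>\<^sub>M Wm"
    and noise_density: "Wm = density lborel pw" "prob_space Wm"
    and X0_rv: "X 0 \<in> borel_measurable M"
    \<comment> \<open>w_0, w_1, ... i.i.d. with law Wm and jointly independent of x_0\<close>
    and iid_indep: "distr M (borel \<Otimes>\<^sub>M PiM UNIV (\<lambda>_. Wm)) (\<lambda>\<omega>. (X 0 \<omega>, \<lambda>k. W k \<omega>))
                     = distr M borel (X 0) \<Otimes>\<^sub>M PiM UNIV (\<lambda>_. Wm)"
    \<comment> \<open>transition density q(x'; th, x, u) of f(x, u, w, th)\<close>
    and q_density: "\<forall>th\<in>Theta. \<forall>x u. distr Wm borel (\<lambda>w. f x u w th) = density lborel (q th x u)"
    and q_meas: "\<forall>th\<in>Theta. (\<lambda>(x, u, x'). q th x u x') \<in> borel_measurable (borel \<Otimes>\<^sub>M Um \<Otimes>\<^sub>M borel)"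
    and q_pos: "\<forall>th\<in>Theta. \<forall>x u x'. q th x u x' > 0"
    and q_C1: "\<forall>th\<in>Theta. \<forall>x u. (\<forall>y. (q th x u has_derivative blinfun_apply (Dq th x u y)) (at y))
                 \<and> continuous_on UNIV (Dq th x u) \<and> (\<exists>B. \<forall>y. norm (Dq th x u y) \<le> B)"
    \<comment> \<open>closed-loop dynamics with a causal measurable control policy\<close>
    and mu_meas: "\<forall>k. mu k \<in> (PiM {..k} (\<lambda>_. borel)) \<Otimes>\<^sub>M (PiM {..<k} (\<lambda>_. Um)) \<rightarrow>\<^sub>M Um"
    and U_def: "\<forall>k \<omega>. U k \<omega> = mu k (restrict (\<lambda>i. X i \<omega>) {..k}, restrict (\<lambda>i. U i \<omega>) {..<k})"
    and X_dyn: "\<forall>k \<omega>. X (Suc k) \<omega> = f (X k \<omega>) (U k \<omega>) (W k \<omega>) thstar"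
  defines "d \<equiv> (\<lambda>j \<omega>. DKL (density lborel (q thstar (X j \<omega>) (U j \<omega>)))
       (density lborel (qhat Theta pi0 q (\<lambda>i. X i \<omega>) (\<lambda>i. U i \<omega>) (Suc j) (X j \<omega>) (U j \<omega>))))"
  shows "(\<integral>\<^sup>+\<omega>. (\<Sum>j. ennreal (d j \<omega>)) \<partial>M) = (\<Sum>j. \<integral>\<^sup>+\<omega>. ennreal (d j \<omega>) \<partial>M)
       \<and> (\<Sum>j. \<integral>\<^sup>+\<omega>. ennreal (d j \<omega>) \<partial>M) \<le> ennreal (- ln (pi0 thstar))
       \<and> ennreal (- ln (pi0 thstar)) < \<infinity>
       \<and> (AE \<omega> in M. (\<lambda>j. d j \<omega>) \<longlonglongrightarrow> 0)"
proof -
  interpret S: sys M Um Wm pw f q Dq Theta thstar pi0 X U W mu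
    unfolding sys_def by (intro conjI; rule assms)
  show ?thesis unfolding d_def by (rule S.main_sys)
qed

end
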